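(* Let $\mu$ be a critical offspring distribution on $\mathbb{Z}_+$ and let $\mathbf{P}_\mu$ be the probability measure on the set $\mathbb{T}$ of infinite trees described in the context. Then $\mathbf{P}_\mu$ is invariant under the shift $\tau:\mathbb{T}\to\mathbb{T}$, i.e. if $\mathcal{T}$ has law $\mathbf{P}_\mu$ then $\tau(\mathcal{T})$ has law $\mathbf{P}_\mu$.
   Context: Plane trees: let $\mathcal{U}=\bigcup_{n\ge0}\mathbb{N}^n$ ($\mathbb{N}=\{1,2,\dots\}$, $\mathbb{N}^0=\{\varnothing\}$), with lexicographical order $\prec$ and concatenation $uv$. A plane tree is a finite $\mathcal{T}\subset\mathcal{U}$ with $\varnothing\in\mathcal{T}$, closed under taking parents $(u_1,\dots,u_n)\mapsto(u_1,\dots,u_{n-1})$, and such that for each $u\in\mathcal{T}$ there is $k_u(\mathcal{T})\ge0$ (number of children) with $uj\in\mathcal{T}$ iff $1\le j\le k_u(\mathcal{T})$. For $u\in\mathcal{T}$, $[\mathcal{T}]_u=\{v: uv\in\mathcal{T}\}$. $\mu$ is a probability measure on $\mathbb{Z}_+$ with $\sum_k k\mu(k)=1$ and $\mu(1)\ne1$; $\Pi_\mu$ is the law of a Galton–Watson tree with offspring distribution $\mu$ (viewed as a random plane tree). Infinite trees: let $\mathcal{V}=\mathbb{Z}_-\times\mathcal{U}$ with $\mathbb{Z}_-=\{0,-1,-2,\dots\}$, identifying $j\in\mathbb{Z}_-$ with $(j,\varnothing)$. An infinite tree is a subset $\mathcal{T}\subset\mathcal{V}$ containing $\mathbb{Z}_-$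 such that for every $j\in\mathbb{Z}_-$, $\mathcal{T}_j:=\{u\in\mathcal{U}:(j,u)\in\mathcal{T}\}$ is a plane tree, and $\mathcal{T}\setminus\mathbb{Z}_-$ is infinite; $\mathbb{T}$ denotes the set of infinite trees (the tree is determined by $(\mathcal{T}_j)_{j\le0}$). The vertices of $\mathcal{T}\setminus\mathbb{Z}_-$ are ordered lexicographically by: $(j,u)\prec(j',u')$ iff $j>j'$, or $j=j'$ and $u\prec u'$. Shift: for $\mathcal{T}\in\mathbb{T}$, let $k\in\mathbb{Z}_-$ be the largest $j\le 0$ with $k_\varnothing(\mathcal{T}_j)\ge1$ (so that $(k,1)$ is the first vertex of $\mathcal{T}\setminus\mathbb{Z}_-$ in lexicographical order). Then $\tau(\mathcal{T})=\mathcal{T}'$ is the infinite tree with $\mathcal{T}'_j=\mathcal{T}_{j+k+1}$ for $j\le-2$, $\mathcal{T}'_0=[\mathcal{T}_k]_1$, and $\mathcal{T}'_{-1}$ the unique plane tree for which there is a bijection from $\mathcal{T}_k\setminus\{u\in\mathcal{T}_k: u=1w \text{ for some } w\in\mathcal{U}\}$ onto $\mathcal{T}'_{-1}$ preserving both lexicographical and genealogical order. $\mathbf{P}_\mu$ is the law on $\mathbb{T}$ under which $\mathcal{T}_0,\mathcal{T}_{-1},\mathcal{T}_{-2},\dots$ are independent, $\mathcal{T}_0$ has law $\Pi_\mu$, and for each $j\le-1$, $\mathbf{P}_\mu(k_\varnothing(\mathcal{T}_j)=n)=\mu([n+1,\infty))$ for $n\ge0$ and, conditionally on $k_\varnothing(\mathcal{T}_j)=n$,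 the subtrees $[\mathcal{T}_j]_1,\dots,[\mathcal{T}_j]_n$ are independent with law $\Pi_\mu$. *)

theory Defs
  imports "HOL-Probability.Probability"
begin

text \<open>Vertices of plane trees are finite words over positive integers, i.e. nat lists
  with entries at least 1. The child u j of u is the list u @ [j]; the parent of a
  nonempty word is butlast.\<close>

definition plane_tree :: "nat list set \<Rightarrow> bool" where
  "plane_tree T \<longleftrightarrow> finite T \<and> [] \<in> T \<and>
     (\<forall>u\<in>T. \<forall>x\<in>set u. 1 \<le> x) \<and>
     (\<forall>u\<in>T. u \<noteq> [] \<longrightarrow> butlast u \<in> T) \<and>
     (\<forall>u\<in>T. \<exists>k::nat. \<forall>j. u @ [j] \<in> T \<longleftrightarrow> 1 \<le> j \<and> j \<le> k)"

definition kids :: "nat list set \<Rightarrow> nat list \<Rightarrow> nat" where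
  "kids T u = card {j. u @ [j] \<in> T}"

definition subtree :: "nat list set \<Rightarrow> nat list \<Rightarrow> nat list set" where
  "subtree T u = {v. u @ v \<in> T}"

text \<open>lexicographical order on words (a proper prefix comes first)\<close>
definition lex_less :: "nat list \<Rightarrow> nat list \<Rightarrow> bool" where
  "lex_less u v \<longleftrightarrow> (u, v) \<in> lexord {(a, b). a < b}"

definition gen_le :: "nat list \<Rightarrow> nat list \<Rightarrow> bool" where
  "gen_le u v \<longleftrightarrow> prefix u v"

definition gw_weight :: "nat pmf \<Rightarrow> nat list set \<Rightarrow> real" where
  "gw_weight mu t = (\<Prod>u\<in>t. pmf mu (kids t u))"

definition GW :: "nat pmf \<Rightarrow> nat list set measure" where
  "GW mu = density (count_space UNIV)
     (\<lambda>t. if plane_tree t then ennreal (gw_weight mu t) else 0)"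

text \<open>Law of T_j for j \<le> -1: root degree n with probability mu([n+1,oo)), and
  conditionally on it the n subtrees of the root are i.i.d. with law Pi_mu.\<close>
definition GW_spine :: "nat pmf \<Rightarrow> nat list set measure" where
  "GW_spine mu = density (count_space UNIV)
     (\<lambda>t. if plane_tree t then
            ennreal (measure_pmf.prob mu {Suc (kids t [])..} *
                     (\<Prod>i\<in>{1..kids t []}. gw_weight mu (subtree t [i])))
          else 0)"

text \<open>An infinite tree is encoded by the sequence of its plane trees:
  f i = T_{-i} for i :: nat.\<close>
definition infinite_trees :: "(nat \<Rightarrow> nat list set) set" where
  "infinite_trees = {f. (\<forall>i. plane_tree (f i)) \<and>
      infinite (\<Union>i. {(i, u) | u. u \<in> f i \<and> u \<noteq> []})}"

definition tree_product :: "nat pmf \<Rightarrow> (nat \<Rightarrow> nat list set) measure" where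
  "tree_product mu = (\<Pi>\<^sub>M i\<in>(UNIV::nat set). if i = 0 then GW mu else GW_spine mu)"

definition P_mu :: "nat pmf \<Rightarrow> (nat \<Rightarrow> nat list set) measure" where
  "P_mu mu = restrict_space (tree_product mu) infinite_trees"

definition cut_first :: "nat list set \<Rightarrow> nat list set" where
  "cut_first T = {u \<in> T. \<not> (\<exists>w. u = 1 # w)}"

definition reduced :: "nat list set \<Rightarrow> nat list set" where
  "reduced T = (THE T'. plane_tree T' \<and>
     (\<exists>\<phi>. bij_betw \<phi> (cut_first T) T' \<and>
        (\<forall>u\<in>cut_first T. \<forall>v\<in>cut_first T.
           (lex_less u v \<longleftrightarrow> lex_less (\<phi> u) (\<phi> v)) \<and>
           (gen_le u v \<longleftrightarrow> gen_le (\<phi> u) (\<phi> v)))))"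

text \<open>first index m (so k = -m) with k_root(T_{-m}) \<ge> 1\<close>
definition first_nontriv :: "(nat \<Rightarrow> nat list set) \<Rightarrow> nat" where
  "first_nontriv f = (LEAST i. 1 \<le> kids (f i) [])"

text \<open>T'_0 = [T_k]_1, T'_{-1} = reduced T_k, T'_j = T_{j+k+1} for j \<le> -2\<close>
definition tau :: "(nat \<Rightarrow> nat list set) \<Rightarrow> (nat \<Rightarrow> nat list set)" where
  "tau f = (let m = first_nontriv f in
     (\<lambda>i. if i = 0 then subtree (f m) [1]
          else if i = 1 then reduced (f m)
          else f (i + m - 1)))"

end

theory Submission
  imports Defs
begin



lemma plane_finite: "plane_tree T \<Longrightarrow> finite T" unfolding plane_tree_def by (elim conjE)
lemma plane_root: "plane_tree T \<Longrightarrow> [] \<in> T" unfolding plane_tree_def by (elim conjE)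
lemma plane_pos: "plane_tree T \<Longrightarrow> u \<in> T \<Longrightarrow> x \<in> set u \<Longrightarrow> 1 \<le> x"
  unfolding plane_tree_def by (elim conjE) (drule bspec, assumption, drule bspec, assumption)
lemma plane_butlast: "plane_tree T \<Longrightarrow> u \<in> T \<Longrightarrow> u \<noteq> [] \<Longrightarrow> butlast u \<in> T"
  unfolding plane_tree_def by (elim conjE) (drule bspec[where x=u], assumption, simp)
lemma plane_kex: "plane_tree T \<Longrightarrow> u \<in> T \<Longrightarrow> \<exists>k. \<forall>j. u @ [j] \<in> T \<longleftrightarrow> 1 \<le> j \<and> j \<le> k"
  unfolding plane_tree_def by (elim conjE) (drule bspec[where x=u], assumption, assumption)
lemma plane_treeI:
  assumes "finite T" "[] \<in> T" "\<And>u x. u \<in> T \<Longrightarrow> x \<in> set u \<Longrightarrow> 1 \<le> x"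
    "\<And>u. u \<in> T \<Longrightarrow> u \<noteq> [] \<Longrightarrow> butlast u \<in> T"
    "\<And>u. u \<in> T \<Longrightarrow> \<exists>k. \<forall>j. u @ [j] \<in> T \<longleftrightarrow> 1 \<le> j \<and> j \<le> k"
  shows "plane_tree T"
  unfolding plane_tree_def using assms by simp

lemma plane_prefix:
  assumes "plane_tree T" "u \<in> T" "prefix v u" shows "v \<in> T"
  using assms(2,3)
proof (induction u rule: rev_induct)
  case Nil then show ?case by simp
next
  case (snoc x xs)
  have "xs \<in> T" using plane_butlast[OF assms(1) snoc.prems(1)] by simp
  then show ?case using snoc by auto
qed

lemma plane_kids:
  assumes "plane_tree T" "u \<in> T" shows "{j. u @ [j] \<in> T} = {1..kids T u}"
proof -
  obtain k where k: "\<forall>j. u @ [j] \<in> T \<longleftrightarrow> 1 \<le> j \<and> j \<le> k"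
    using plane_kex[OF assms] by (elim exE)
  then have e: "{j. u @ [j] \<in> T} = {1..k}" by (intro set_eqI) simp
  then have "kids T u = k" unfolding kids_def by simp
  then show ?thesis using e by simp
qed

lemma plane_child_iff:
  assumes "plane_tree T" "u \<in> T" shows "u @ [j] \<in> T \<longleftrightarrow> 1 \<le> j \<and> j \<le> kids T u"
proof -
  have "u @ [j] \<in> T \<longleftrightarrow> j \<in> {j. u @ [j] \<in> T}" by simp
  also have "\<dots> \<longleftrightarrow> j \<in> {1..kids T u}" using plane_kids[OF assms] by simp
  finally show ?thesis by simp
qed

lemma plane_child_closed:
  assumes "plane_tree T" "p @ [c] \<in> T" "1 \<le> j" "j \<le> c" shows "p @ [j] \<in> T"
proof -
  have p: "p \<in> T" using plane_prefix[OF assms(1,2)] by simp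
  show ?thesis using plane_child_iff[OF assms(1) p] assms by auto
qed

definition mk :: "nat list set list \<Rightarrow> nat list set" where
  "mk ts = insert [] (\<Union>i<length ts. (\<lambda>w. Suc i # w) ` (ts!i))"

definition children :: "nat list set \<Rightarrow> nat list set list" where
  "children t = map (\<lambda>i. subtree t [Suc i]) [0..<kids t []]"

lemma mk_Nil[simp]: "[] \<in> mk ts" by (simp add: mk_def)
lemma mk_Cons_iff[simp]: "Suc i # w \<in> mk ts \<longleftrightarrow> i < length ts \<and> w \<in> ts!i"
  by (auto simp: mk_def)
lemma mk_0[simp]: "0 # w \<notin> mk ts" by (auto simp: mk_def)

lemma mk_cases: "u \<in> mk ts \<Longrightarrow> u = [] \<or> (\<exists>i w. u = Suc i # w \<and> i < length ts \<and> w \<in> ts!i)"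
  by (auto simp: mk_def)

lemma kids_mk_root:
  assumes "\<forall>s\<in>set ts. [] \<in> s" shows "kids (mk ts) [] = length ts"
proof -
  have "{j. [] @ [j] \<in> mk ts} = {1..length ts}"
  proof safe
    fix j assume "[] @ [j] \<in> mk ts"
    then show "j \<in> {1..length ts}" by (cases j) auto
  next
    fix j assume "j \<in> {1..length ts}"
    then obtain i where "j = Suc i" "i < length ts" by (cases j) auto
    then show "[] @ [j] \<in> mk ts" using assms by (auto simp: nth_mem)
  qed
  then show ?thesis by (simp add: kids_def)
qed

lemma kids_mk_Cons:
  "i < length ts \<Longrightarrow> kids (mk ts) (Suc i # w) = kids (ts!i) w"
  by (simp add: kids_def)

lemma subtree_mk: "i < length ts \<Longrightarrow> subtree (mk ts) [Suc i] = ts!i"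
  by (simp add: subtree_def)

lemma children_mk:
  assumes "\<forall>s\<in>set ts. [] \<in> s" shows "children (mk ts) = ts"
  by (rule nth_equalityI) (auto simp: children_def kids_mk_root[OF assms] subtree_mk)

lemma plane_subtree:
  assumes "plane_tree t" "u \<in> t" shows "plane_tree (subtree t u)"
proof -
  have A: "finite {v. u @ v \<in> t}"
    using finite_vimageI[OF plane_finite[OF assms(1)], of "\<lambda>v. u @ v"] by (simp add: vimage_def inj_on_def)
  have B: "\<forall>v\<in>{v. u @ v \<in> t}. \<forall>x\<in>set v. 1 \<le> x"
    using plane_pos[OF assms(1)] by auto
  have C: "\<forall>v\<in>{v. u @ v \<in> t}. v \<noteq> [] \<longrightarrow> butlast v \<in> {v. u @ v \<in> t}"
  proof (intro ballI impI)
    fix v assume "v \<in> {v. u @ v \<in> t}" "v \<noteq> []"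
    then have "butlast (u @ v) \<in> t" using plane_butlast[OF assms(1)] by simp
    then show "butlast v \<in> {v. u @ v \<in> t}" using \<open>v \<noteq> []\<close> by (simp add: butlast_append)
  qed
  have D: "\<forall>v\<in>{v. u @ v \<in> t}. \<exists>k. \<forall>j. v @ [j] \<in> {v. u @ v \<in> t} \<longleftrightarrow> 1 \<le> j \<and> j \<le> k"
  proof
    fix v assume "v \<in> {v. u @ v \<in> t}"
    then have uv: "u @ v \<in> t" by simp
    obtain k where "\<forall>j. (u @ v) @ [j] \<in> t \<longleftrightarrow> 1 \<le> j \<and> j \<le> k"
      using plane_kex[OF assms(1) uv] by (elim exE)
    then show "\<exists>k. \<forall>j. v @ [j] \<in> {v. u @ v \<in> t} \<longleftrightarrow> 1 \<le> j \<and> j \<le> k"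
      by (intro exI[of _ k]) simp
  qed
  show ?thesis unfolding subtree_def
    by (rule plane_treeI) (use A B C D assms(2) in auto)
qed

lemma children_length[simp]: "length (children t) = kids t []"
  by (simp add: children_def)

lemma children_nth: "i < kids t [] \<Longrightarrow> children t ! i = subtree t [Suc i]"
  by (simp add: children_def)

lemma plane_children:
  assumes "plane_tree t" "s \<in> set (children t)" shows "plane_tree s"
proof -
  obtain i where i: "i < kids t []" "s = subtree t [Suc i]"
    using assms(2) by (auto simp: children_def)
  have "[] @ [Suc i] \<in> t" using plane_child_iff[OF assms(1) plane_root[OF assms(1)]] i by auto
  then show ?thesis using plane_subtree[OF assms(1)] i by simp
qed

lemma mk_children:
  assumes "plane_tree t" shows "mk (children t) = t"
proof safe
  fix u assume "u \<in> mk (children t)"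
  then show "u \<in> t" using mk_cases[of u "children t"] plane_root[OF assms]
    by (auto simp: children_nth subtree_def)
next
  fix u assume u: "u \<in> t"
  show "u \<in> mk (children t)"
  proof (cases u)
    case Nil then show ?thesis by simp
  next
    case (Cons x w)
    have "1 \<le> x" using plane_pos[OF assms u] Cons by simp
    then obtain i where x: "x = Suc i" by (cases x) auto
    have "[] @ [x] \<in> t" using plane_prefix[OF assms u] Cons by simp
    then have "x \<le> kids t []" using plane_child_iff[OF assms plane_root[OF assms]] by blast
    then show ?thesis using Cons x u by (auto simp: children_nth subtree_def)
  qed
qed

lemma plane_mk:
  assumes "\<forall>s\<in>set ts. plane_tree s" shows "plane_tree (mk ts)"
proof -
  have P: "\<And>i. i < length ts \<Longrightarrow> plane_tree (ts!i)" using assms nth_mem by blast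
  have A: "finite (mk ts)" using P plane_finite by (simp add: mk_def)
  have B: "\<forall>u\<in>mk ts. \<forall>x\<in>set u. 1 \<le> x"
  proof (intro ballI)
    fix u x assume "u \<in> mk ts" "x \<in> set u"
    then show "1 \<le> x" using mk_cases[of u ts] P plane_pos by force
  qed
  have C: "\<forall>u\<in>mk ts. u \<noteq> [] \<longrightarrow> butlast u \<in> mk ts"
  proof (intro ballI impI)
    fix u assume "u \<in> mk ts" "u \<noteq> []"
    then obtain i w where iw: "u = Suc i # w" "i < length ts" "w \<in> ts!i"
      using mk_cases[of u ts] by blast
    show "butlast u \<in> mk ts"
    proof (cases "w = []")
      case True then show ?thesis using iw by simp
    next
      case False
      then have "butlast w \<in> ts!i" using plane_butlast[OF P[OF iw(2)] iw(3)] by blast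
      then show ?thesis using iw False by simp
    qed
  qed
  have D: "\<forall>u\<in>mk ts. \<exists>k. \<forall>j. u @ [j] \<in> mk ts \<longleftrightarrow> 1 \<le> j \<and> j \<le> k"
  proof
    fix u assume u: "u \<in> mk ts"
    show "\<exists>k. \<forall>j. u @ [j] \<in> mk ts \<longleftrightarrow> 1 \<le> j \<and> j \<le> k"
    proof (cases "u = []")
      case True
      have "\<forall>j. [] @ [j] \<in> mk ts \<longleftrightarrow> 1 \<le> j \<and> j \<le> length ts"
      proof
        fix j show "[] @ [j] \<in> mk ts \<longleftrightarrow> 1 \<le> j \<and> j \<le> length ts"
        proof (cases j)
          case 0 then show ?thesis by simp
        next
          case (Suc i) then show ?thesis using P plane_root by auto
        qed
      qed
      then show ?thesis using True by (intro exI[of _ "length ts"]) simp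
    next
      case False
      then obtain i w where iw: "u = Suc i # w" "i < length ts" "w \<in> ts!i"
        using mk_cases[OF u] by blast
      then obtain k where "\<forall>j. w @ [j] \<in> ts!i \<longleftrightarrow> 1 \<le> j \<and> j \<le> k"
        using plane_kex[OF P[OF iw(2)] iw(3)] by (elim exE)
      then show ?thesis using iw by (intro exI[of _ k]) simp
    qed
  qed
  show ?thesis by (rule plane_treeI) (use A B C D in auto)
qed

lemma gw_weight_mk:
  assumes "\<forall>s\<in>set ts. plane_tree s"
  shows "gw_weight mu (mk ts) = pmf mu (length ts) * (\<Prod>i<length ts. gw_weight mu (ts!i))"
proof -
  let ?U = "\<Union>i<length ts. (\<lambda>w. Suc i # w) ` (ts!i)"
  have fin: "\<forall>i<length ts. finite (ts!i)" using assms plane_finite nth_mem by blast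
  have "gw_weight mu (mk ts) = pmf mu (kids (mk ts) []) * (\<Prod>u\<in>?U. pmf mu (kids (mk ts) u))"
    unfolding gw_weight_def mk_def[of ts]
  proof (subst prod.insert)
    show "finite ?U" using fin by simp
    show "[] \<notin> ?U" by blast
  qed simp
  also have "kids (mk ts) [] = length ts"
    using kids_mk_root assms plane_root by blast
  also have "(\<Prod>u\<in>?U. pmf mu (kids (mk ts) u)) =
      (\<Prod>i<length ts. \<Prod>u\<in>(\<lambda>w. Suc i # w) ` (ts!i). pmf mu (kids (mk ts) u))"
    by (rule prod.UNION_disjoint) (use fin in \<open>auto simp: disjoint_family_on_def\<close>)
  also have "\<dots> = (\<Prod>i<length ts. gw_weight mu (ts!i))"
  proof (rule prod.cong[OF refl])
    fix i assume "i \<in> {..<length ts}"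
    then show "(\<Prod>u\<in>(\<lambda>w. Suc i # w) ` (ts!i). pmf mu (kids (mk ts) u)) = gw_weight mu (ts!i)"
      by (subst prod.reindex) (auto simp: inj_on_def kids_mk_Cons gw_weight_def)
  qed
  finally show ?thesis .
qed




lemma lex_irrefl: "\<not> lex_less u u"
  unfolding lex_less_def by (rule lexord_irreflexive) simp

lemma lex_trans: "lex_less u v \<Longrightarrow> lex_less v w \<Longrightarrow> lex_less u w"
  unfolding lex_less_def by (rule lexord_trans) (auto simp: trans_def)

lemma prefix_lex: "prefix v u \<Longrightarrow> v \<noteq> u \<Longrightarrow> lex_less v u"
  unfolding lex_less_def prefix_def
  by (metis append.right_neutral lexord_append_rightI neq_Nil_conv)

lemma lex_snoc: "j < j' \<Longrightarrow> lex_less (p @ [j]) (p @ [j'])"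
  unfolding lex_less_def by (rule lexord_append_leftI) simp

lemma iso_id:
  assumes T1: "plane_tree T1" and T2: "plane_tree T2" and bij: "bij_betw \<psi> T1 T2"
    and lex: "\<forall>u\<in>T1. \<forall>v\<in>T1. lex_less u v \<longleftrightarrow> lex_less (\<psi> u) (\<psi> v)"
    and gen: "\<forall>u\<in>T1. \<forall>v\<in>T1. gen_le u v \<longleftrightarrow> gen_le (\<psi> u) (\<psi> v)"
  shows "\<forall>u\<in>T1. \<psi> u = u"
proof -
  have inj: "inj_on \<psi> T1" and img: "\<psi> ` T1 = T2" using bij by (auto simp: bij_betw_def)
  have fin: "finite T1" using plane_finite[OF T1] .
  have surj: "\<exists>x\<in>T1. \<psi> x = y" if "y \<in> T2" for y using img that by blast
  have lexI: "lex_less u v" if "u \<in> T1" "v \<in> T1" "lex_less (\<psi> u) (\<psi> v)" for u v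
    using lex that by blast
  have lexD: "lex_less (\<psi> u) (\<psi> v)" if "u \<in> T1" "v \<in> T1" "lex_less u v" for u v
    using lex that by blast
  have genI: "prefix u v" if "u \<in> T1" "v \<in> T1" "prefix (\<psi> u) (\<psi> v)" for u v
    using gen that unfolding gen_le_def by blast
  have genD: "prefix (\<psi> u) (\<psi> v)" if "u \<in> T1" "v \<in> T1" "prefix u v" for u v
    using gen that unfolding gen_le_def by blast
  have main: "\<And>u. card {v\<in>T1. lex_less v u} = n \<Longrightarrow> u \<in> T1 \<Longrightarrow> \<psi> u = u" for n
  proof (induction n rule: less_induct)
    case (less n u)
    have IH: "\<psi> v = v" if v: "v \<in> T1" "lex_less v u" for v
    proof -
      have "{w\<in>T1. lex_less w v} \<subset> {w\<in>T1. lex_less w u}"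
        using v lex_trans lex_irrefl by blast
      then have "card {w\<in>T1. lex_less w v} < n"
        using less.prems(1) fin by (metis (no_types, lifting) finite_subset mem_Collect_eq psubset_card_mono subsetI)
      then show ?thesis using less.IH v(1) by blast
    qed
    show "\<psi> u = u"
    proof (cases u rule: rev_cases)
      case Nil
      obtain x where x: "x \<in> T1" "\<psi> x = []" using surj plane_root[OF T2] by blast
      have "prefix (\<psi> []) (\<psi> x)" using genD[OF plane_root[OF T1] x(1)] by simp
      then show ?thesis using x Nil by simp
    next
      case (snoc p j)
      have uT: "u \<in> T1" by fact
      have pT: "p \<in> T1" using plane_prefix[OF T1 uT] snoc by simp
      have pu: "p \<noteq> u" using snoc by simp
      have psip: "\<psi> p = p" using IH[OF pT prefix_lex] snoc by simp
      have "prefix p (\<psi> u)" using genD[OF pT uT] snoc psip by simp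
      moreover have "\<psi> u \<noteq> p" using inj pu pT uT psip by (metis inj_on_def)
      ultimately obtain c w where cw: "\<psi> u = p @ c # w"
        by (metis append.right_neutral neq_Nil_conv prefix_def)
      have uT2: "\<psi> u \<in> T2" using img uT by blast
      have yT2: "p @ [c] \<in> T2" using plane_prefix[OF T2 uT2] cw by simp
      obtain x where x: "x \<in> T1" "\<psi> x = p @ [c]" using surj[OF yT2] by blast
      have "prefix x u" using genI[OF x(1) uT] x(2) cw by simp
      then have "x = u \<or> prefix x p" using snoc by simp
      moreover have "\<not> prefix x p"
      proof
        assume xp: "prefix x p"
        have "prefix p u" using snoc by simp
        then have xu: "prefix x u" using xp prefix_order.trans by blast
        have "length x \<le> length p" using xp prefix_length_le by blast
        then have "x \<noteq> u" using snoc by auto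
        then have "lex_less x u" using prefix_lex[OF xu] by simp
        then have "\<psi> x = x" using IH x(1) by blast
        then have "x = p @ [c]" using x(2) by simp
        then show False using xp prefix_length_le by fastforce
      qed
      ultimately have psiu: "\<psi> u = p @ [c]" using x by blast
      have c1: "1 \<le> c" using plane_pos[OF T2 yT2] by simp
      have j1: "1 \<le> j" using plane_pos[OF T1 uT] snoc by simp
      have "c = j"
      proof (rule ccontr)
        assume "c \<noteq> j"
        then consider "c < j" | "j < c" by linarith
        then show False
        proof cases
          case 1
          have cT: "p @ [c] \<in> T1" using plane_child_closed[OF T1 _ c1] uT snoc 1 by simp
          have "lex_less (p @ [c]) u" using lex_snoc[OF 1] snoc by simp
          then have "\<psi> (p @ [c]) = \<psi> u" using IH[OF cT] psiu by simp
          then have "p @ [c] = u" using inj cT uT by (metis inj_on_def)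
          then show False using 1 snoc by simp
        next
          case 2
          have jT2: "p @ [j] \<in> T2" using plane_child_closed[OF T2 yT2 j1] 2 by simp
          obtain x' where x': "x' \<in> T1" "\<psi> x' = p @ [j]" using surj[OF jT2] by blast
          have "lex_less (\<psi> x') (\<psi> u)" using lex_snoc[OF 2] x' psiu by simp
          then have "lex_less x' u" using lexI[OF x'(1) uT] by simp
          then have "\<psi> x' = x'" using IH x'(1) by blast
          then have "x' = u" using x' snoc by simp
          then show False using x' psiu 2 by simp
        qed
      qed
      then show ?thesis using psiu snoc by simp
    qed
  qed
  show ?thesis using main by blast
qed

definition dec :: "nat list \<Rightarrow> nat list" where
  "dec u = (case u of [] \<Rightarrow> [] | x # w \<Rightarrow> (x - 1) # w)"

lemma dec_Nil[simp]: "dec [] = []" and dec_Cons[simp]: "dec (x # w) = (x - 1) # w"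
  by (simp_all add: dec_def)

lemma dec_order:
  assumes "u = [] \<or> 2 \<le> hd u" "v = [] \<or> 2 \<le> hd v"
  shows "(lex_less u v \<longleftrightarrow> lex_less (dec u) (dec v)) \<and> (gen_le u v \<longleftrightarrow> gen_le (dec u) (dec v))"
  using assms unfolding lex_less_def gen_le_def
  by (cases u; cases v) auto

lemma cut_first_mk:
  "u \<in> cut_first (mk (s # ts)) \<longleftrightarrow> u = [] \<or> (\<exists>i w. u = Suc (Suc i) # w \<and> i < length ts \<and> w \<in> ts!i)"
proof
  assume "u \<in> cut_first (mk (s # ts))"
  then have u: "u \<in> mk (s # ts)" "\<not> (\<exists>w. u = 1 # w)" by (auto simp: cut_first_def)
  from mk_cases[OF u(1)] show "u = [] \<or> (\<exists>i w. u = Suc (Suc i) # w \<and> i < length ts \<and> w \<in> ts!i)"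
  proof
    assume "\<exists>i w. u = Suc i # w \<and> i < length (s # ts) \<and> w \<in> (s # ts) ! i"
    then obtain i w where iw: "u = Suc i # w" "i < length (s # ts)" "w \<in> (s # ts) ! i" by blast
    then obtain i' where "i = Suc i'" using u(2) by (cases i) auto
    then show ?thesis using iw by auto
  qed simp
next
  assume "u = [] \<or> (\<exists>i w. u = Suc (Suc i) # w \<and> i < length ts \<and> w \<in> ts!i)"
  then show "u \<in> cut_first (mk (s # ts))" by (auto simp: cut_first_def)
qed

lemma reduced_mk:
  assumes s: "plane_tree s" and ts: "\<forall>x\<in>set ts. plane_tree x"
  shows "reduced (mk (s # ts)) = mk ts"
proof -
  let ?D = "cut_first (mk (s # ts))"
  have Dhd: "u = [] \<or> 2 \<le> hd u" if "u \<in> ?D" for u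
    using that unfolding cut_first_mk by auto
  have bij: "bij_betw dec ?D (mk ts)"
  proof (rule bij_betwI')
    fix x y assume "x \<in> ?D" "y \<in> ?D"
    then show "(dec x = dec y) = (x = y)" unfolding cut_first_mk by auto
  next
    fix x assume "x \<in> ?D"
    then show "dec x \<in> mk ts" unfolding cut_first_mk by auto
  next
    fix y assume y: "y \<in> mk ts"
    show "\<exists>x\<in>?D. y = dec x"
      using mk_cases[OF y]
    proof
      assume "y = []" then show ?thesis by (intro bexI[of _ "[]"]) (simp_all add: cut_first_mk)
    next
      assume "\<exists>i w. y = Suc i # w \<and> i < length ts \<and> w \<in> ts ! i"
      then obtain i w where iw: "y = Suc i # w" "i < length ts" "w \<in> ts ! i" by blast
      then show ?thesis by (intro bexI[of _ "Suc (Suc i) # w"]) (simp_all add: cut_first_mk)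
    qed
  qed
  have ord: "\<forall>u\<in>?D. \<forall>v\<in>?D. (lex_less u v \<longleftrightarrow> lex_less (dec u) (dec v)) \<and> (gen_le u v \<longleftrightarrow> gen_le (dec u) (dec v))"
    using dec_order Dhd by blast
  have plane: "plane_tree (mk ts)" using plane_mk ts by blast
  show ?thesis unfolding reduced_def
  proof (rule the_equality)
    show "plane_tree (mk ts) \<and> (\<exists>\<phi>. bij_betw \<phi> ?D (mk ts) \<and> (\<forall>u\<in>?D. \<forall>v\<in>?D.
           (lex_less u v \<longleftrightarrow> lex_less (\<phi> u) (\<phi> v)) \<and> (gen_le u v \<longleftrightarrow> gen_le (\<phi> u) (\<phi> v))))"
      using plane bij ord by blast
  next
    fix T' assume "plane_tree T' \<and> (\<exists>\<phi>. bij_betw \<phi> ?D T' \<and> (\<forall>u\<in>?D. \<forall>v\<in>?D.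
           (lex_less u v \<longleftrightarrow> lex_less (\<phi> u) (\<phi> v)) \<and> (gen_le u v \<longleftrightarrow> gen_le (\<phi> u) (\<phi> v))))"
    then obtain \<phi> where T': "plane_tree T'" and bphi: "bij_betw \<phi> ?D T'"
      and ordphi: "\<forall>u\<in>?D. \<forall>v\<in>?D. (lex_less u v \<longleftrightarrow> lex_less (\<phi> u) (\<phi> v)) \<and> (gen_le u v \<longleftrightarrow> gen_le (\<phi> u) (\<phi> v))"
      by blast
    define g where "g = inv_into ?D dec"
    have bg: "bij_betw g (mk ts) ?D" unfolding g_def by (rule bij_betw_inv_into[OF bij])
    have gdec: "dec (g a) = a" if "a \<in> mk ts" for a
      unfolding g_def using bij that by (simp add: bij_betw_inv_into_right)
    have gD: "g a \<in> ?D" if "a \<in> mk ts" for a using bg that bij_betwE by blast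
    let ?psi = "\<phi> \<circ> g"
    have bpsi: "bij_betw ?psi (mk ts) T'" using bij_betw_trans[OF bg bphi] .
    have o1: "\<forall>a\<in>mk ts. \<forall>b\<in>mk ts. lex_less a b \<longleftrightarrow> lex_less (?psi a) (?psi b)"
    proof (intro ballI)
      fix a b assume a: "a \<in> mk ts" and b: "b \<in> mk ts"
      have "lex_less a b \<longleftrightarrow> lex_less (dec (g a)) (dec (g b))" using gdec a b by simp
      also have "\<dots> \<longleftrightarrow> lex_less (g a) (g b)" using ord gD[OF a] gD[OF b] by blast
      also have "\<dots> \<longleftrightarrow> lex_less (\<phi> (g a)) (\<phi> (g b))" using ordphi gD[OF a] gD[OF b] by blast
      finally show "lex_less a b \<longleftrightarrow> lex_less (?psi a) (?psi b)" by simp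
    qed
    have o2: "\<forall>a\<in>mk ts. \<forall>b\<in>mk ts. gen_le a b \<longleftrightarrow> gen_le (?psi a) (?psi b)"
    proof (intro ballI)
      fix a b assume a: "a \<in> mk ts" and b: "b \<in> mk ts"
      have "gen_le a b \<longleftrightarrow> gen_le (dec (g a)) (dec (g b))" using gdec a b by simp
      also have "\<dots> \<longleftrightarrow> gen_le (g a) (g b)" using ord gD[OF a] gD[OF b] by blast
      also have "\<dots> \<longleftrightarrow> gen_le (\<phi> (g a)) (\<phi> (g b))" using ordphi gD[OF a] gD[OF b] by blast
      finally show "gen_le a b \<longleftrightarrow> gen_le (?psi a) (?psi b)" by simp
    qed
    have id: "\<forall>a\<in>mk ts. ?psi a = a" by (rule iso_id[OF plane T' bpsi o1 o2])
    have "T' = ?psi ` mk ts" using bpsi by (simp add: bij_betw_def)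
    also have "\<dots> = mk ts" using id by simp
    finally show "T' = mk ts" .
  qed
qed

definition beta :: "nat list set \<times> nat list set \<Rightarrow> nat list set" where
  "beta p = mk (fst p # children (snd p))"

lemma beta_props:
  assumes s: "plane_tree s" and r: "plane_tree r"
  shows "plane_tree (beta (s, r))" "kids (beta (s, r)) [] = Suc (kids r [])"
    "subtree (beta (s, r)) [1] = s" "reduced (beta (s, r)) = r"
proof -
  have cr: "\<forall>x\<in>set (children r). plane_tree x" using plane_children[OF r] by blast
  have all: "\<forall>x\<in>set (s # children r). plane_tree x" using cr s by simp
  show "plane_tree (beta (s, r))" unfolding beta_def using plane_mk[OF all] by simp
  have roots: "\<forall>x\<in>set (s # children r). [] \<in> x" using all plane_root by blast
  show "kids (beta (s, r)) [] = Suc (kids r [])" unfolding beta_def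
    using kids_mk_root[OF roots] by simp
  show "subtree (beta (s, r)) [1] = s" unfolding beta_def
    using subtree_mk[of 0 "s # children r"] by simp
  show "reduced (beta (s, r)) = r" unfolding beta_def
    using reduced_mk[OF s cr] mk_children[OF r] by simp
qed

lemma beta_bij:
  "bij_betw beta (Collect plane_tree \<times> Collect plane_tree) {t. plane_tree t \<and> 1 \<le> kids t []}"
proof (rule bij_betwI')
  fix x y assume "x \<in> Collect plane_tree \<times> Collect plane_tree" "y \<in> Collect plane_tree \<times> Collect plane_tree"
  then show "(beta x = beta y) = (x = y)"
    using beta_props by (metis mem_Collect_eq mem_Times_iff prod.collapse)
next
  fix x assume "x \<in> Collect plane_tree \<times> Collect plane_tree"
  then show "beta x \<in> {t. plane_tree t \<and> 1 \<le> kids t []}"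
    using beta_props[of "fst x" "snd x"] by auto
next
  fix t assume "t \<in> {t. plane_tree t \<and> 1 \<le> kids t []}"
  then have t: "plane_tree t" "1 \<le> kids t []" by auto
  then obtain s rest where cs: "children t = s # rest"
    by (metis children_length le_zero_eq list.exhaust list.size(3) not_one_le_zero)
  have all: "\<forall>x\<in>set (children t). plane_tree x" using plane_children[OF t(1)] by blast
  then have s: "plane_tree s" and rest: "\<forall>x\<in>set rest. plane_tree x" using cs by auto
  have r: "plane_tree (mk rest)" using plane_mk[OF rest] .
  have "children (mk rest) = rest" using children_mk rest plane_root by blast
  then have "beta (s, mk rest) = t" unfolding beta_def using mk_children[OF t(1)] cs by simp
  then show "\<exists>x\<in>Collect plane_tree \<times> Collect plane_tree. t = beta x" using s r by blast
qed




lemma gw_nonneg: "0 \<le> gw_weight mu t"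
  unfolding gw_weight_def by (rule prod_nonneg) simp

lemma prod_nth_list: "(\<Prod>i<length xs. f (xs!i)) = prod_list (map f xs)"
  by (induction xs) (simp_all add: prod.lessThan_Suc_shift del: prod.lessThan_Suc)

lemma ennreal_prod_list:
  "(\<forall>x\<in>set xs. 0 \<le> f x) \<Longrightarrow> ennreal (prod_list (map f xs)) = prod_list (map (\<lambda>x. ennreal (f x)) xs)"
proof (induction xs)
  case (Cons a xs)
  have "0 \<le> prod_list (map f xs)" using Cons.prems by (intro prod_list_nonneg) auto
  then show ?case using Cons by (simp add: ennreal_mult)
qed simp

lemma prod_list_gw_nonneg: "0 \<le> prod_list (map (gw_weight mu) ts)"
  by (rule prod_list_nonneg) (auto simp: gw_nonneg)

lemma ennreal_prod_list_gw: "ennreal (prod_list (map (gw_weight mu) ts)) = prod_list (map (\<lambda>x. ennreal (gw_weight mu x)) ts)"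
  using ennreal_prod_list[of ts "gw_weight mu"] gw_nonneg by blast

lemma gwE_mk:
  assumes "\<forall>s\<in>set ts. plane_tree s"
  shows "ennreal (gw_weight mu (mk ts)) = ennreal (pmf mu (length ts)) * prod_list (map (\<lambda>x. ennreal (gw_weight mu x)) ts)"
proof -
  have "gw_weight mu (mk ts) = pmf mu (length ts) * prod_list (map (gw_weight mu) ts)"
    using gw_weight_mk[OF assms] prod_nth_list[of "gw_weight mu" ts] by simp
  then show ?thesis
    using ennreal_prod_list_gw[of mu ts] prod_list_gw_nonneg[of mu ts]
    by (simp add: ennreal_mult)
qed

definition spine_w :: "nat pmf \<Rightarrow> nat list set \<Rightarrow> real" where
  "spine_w mu t = measure_pmf.prob mu {Suc (kids t [])..} * (\<Prod>i\<in>{1..kids t []}. gw_weight mu (subtree t [i]))"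

lemma swE_mk:
  assumes "\<forall>s\<in>set ts. plane_tree s"
  shows "ennreal (spine_w mu (mk ts)) = ennreal (measure_pmf.prob mu {Suc (length ts)..}) * prod_list (map (\<lambda>x. ennreal (gw_weight mu x)) ts)"
proof -
  have roots: "\<forall>s\<in>set ts. [] \<in> s" using assms plane_root by blast
  have k: "kids (mk ts) [] = length ts" using kids_mk_root[OF roots] .
  have "(\<Prod>i\<in>{1..length ts}. gw_weight mu (subtree (mk ts) [i])) = (\<Prod>i<length ts. gw_weight mu (subtree (mk ts) [Suc i]))"
  proof -
    have "{1..length ts} = Suc ` {..<length ts}" by (simp add: image_Suc_lessThan)
    then show ?thesis by (simp add: prod.reindex)
  qed
  also have "\<dots> = (\<Prod>i<length ts. gw_weight mu (ts ! i))" by (intro prod.cong) (simp_all add: subtree_mk)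
  also have "\<dots> = prod_list (map (gw_weight mu) ts)" by (rule prod_nth_list)
  finally have "spine_w mu (mk ts) = measure_pmf.prob mu {Suc (length ts)..} * prod_list (map (gw_weight mu) ts)"
    unfolding spine_w_def k by simp
  then show ?thesis
    using ennreal_prod_list_gw[of mu ts] prod_list_gw_nonneg[of mu ts]
    by (simp add: ennreal_mult)
qed

lemma nn_integral_prod_count:
  fixes F :: "'a \<Rightarrow> ennreal" and G :: "'b \<Rightarrow> ennreal"
  shows "(\<integral>\<^sup>+p. F (fst p) * G (snd p) \<partial>count_space (A \<times> C)) = (\<integral>\<^sup>+x. F x \<partial>count_space A) * (\<integral>\<^sup>+y. G y \<partial>count_space C)"
proof -
  have "(\<integral>\<^sup>+p. F (fst p) * G (snd p) \<partial>count_space (A \<times> C)) =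
      (\<integral>\<^sup>+p. F (fst p) * G (snd p) * indicator (A \<times> C) p \<partial>count_space UNIV)"
    by (rule nn_integral_count_space_indicator) simp
  also have "\<dots> = (\<integral>\<^sup>+x. \<integral>\<^sup>+y. F x * G y * indicator (A \<times> C) (x, y) \<partial>count_space UNIV \<partial>count_space UNIV)"
    by (rule nn_integral_fst_count_space[symmetric, where f="\<lambda>p. F (fst p) * G (snd p) * indicator (A \<times> C) p", simplified])
  also have "\<dots> = (\<integral>\<^sup>+x. (F x * indicator A x) * (\<integral>\<^sup>+y. G y * indicator C y \<partial>count_space UNIV) \<partial>count_space UNIV)"
  proof (rule nn_integral_cong)
    fix x
    have "(\<integral>\<^sup>+y. F x * G y * indicator (A \<times> C) (x, y) \<partial>count_space UNIV) =
        (\<integral>\<^sup>+y. (F x * indicator A x) * (G y * indicator C y) \<partial>count_space UNIV)"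
      by (rule nn_integral_cong) (simp add: indicator_def)
    also have "\<dots> = (F x * indicator A x) * (\<integral>\<^sup>+y. G y * indicator C y \<partial>count_space UNIV)"
      by (rule nn_integral_cmult) simp
    finally show "(\<integral>\<^sup>+y. F x * G y * indicator (A \<times> C) (x, y) \<partial>count_space UNIV) =
        (F x * indicator A x) * (\<integral>\<^sup>+y. G y * indicator C y \<partial>count_space UNIV)" .
  qed
  also have "\<dots> = (\<integral>\<^sup>+x. F x * indicator A x \<partial>count_space UNIV) * (\<integral>\<^sup>+y. G y * indicator C y \<partial>count_space UNIV)"
    by (rule nn_integral_multc) simp
  also have "\<dots> = (\<integral>\<^sup>+x. F x \<partial>count_space A) * (\<integral>\<^sup>+y. G y \<partial>count_space C)"
    by (simp add: nn_integral_count_space_indicator)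
  finally show ?thesis .
qed

lemma nn_integral_split_nat:
  fixes H :: "'a \<Rightarrow> ennreal" and h :: "'a \<Rightarrow> nat"
  shows "(\<integral>\<^sup>+x. H x \<partial>count_space X) = (\<Sum>n. \<integral>\<^sup>+x. H x \<partial>count_space {x\<in>X. h x = n})"
proof -
  have "(\<Sum>n. \<integral>\<^sup>+x. H x \<partial>count_space {x\<in>X. h x = n}) =
      (\<Sum>n. \<integral>\<^sup>+x. H x * indicator {x\<in>X. h x = n} x \<partial>count_space UNIV)"
    by (simp add: nn_integral_count_space_indicator)
  also have "\<dots> = (\<integral>\<^sup>+x. (\<Sum>n. H x * indicator {x\<in>X. h x = n} x) \<partial>count_space UNIV)"
    by (rule nn_integral_suminf[symmetric]) simp
  also have "\<dots> = (\<integral>\<^sup>+x. H x * indicator X x \<partial>count_space UNIV)"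
  proof (rule nn_integral_cong)
    fix x
    have "(\<Sum>n. H x * indicator {x\<in>X. h x = n} x) = (\<Sum>n\<in>{h x}. H x * indicator {x\<in>X. h x = n} x)"
      by (rule suminf_finite) (auto simp: indicator_def)
    also have "\<dots> = H x * indicator X x" by (simp add: indicator_def)
    finally show "(\<Sum>n. H x * indicator {x\<in>X. h x = n} x) = H x * indicator X x" .
  qed
  also have "\<dots> = (\<integral>\<^sup>+x. H x \<partial>count_space X)"
    by (simp add: nn_integral_count_space_indicator)
  finally show ?thesis by simp
qed

lemma lists_len_power:
  fixes f :: "'a \<Rightarrow> ennreal"
  shows "(\<integral>\<^sup>+ts. prod_list (map f ts) \<partial>count_space {ts. set ts \<subseteq> B \<and> length ts = n}) = (\<integral>\<^sup>+x. f x \<partial>count_space B) ^ n"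
proof (induction n)
  case 0
  have "{ts. set ts \<subseteq> B \<and> length ts = 0} = {[]}" by auto
  then show ?case by (simp add: nn_integral_count_space_finite)
next
  case (Suc n)
  let ?L = "\<lambda>n. {ts. set ts \<subseteq> B \<and> length ts = n}"
  have bij: "bij_betw (\<lambda>p. fst p # snd p) (B \<times> ?L n) (?L (Suc n))"
  proof (rule bij_betwI')
    fix x y assume "x \<in> B \<times> ?L n" "y \<in> B \<times> ?L n"
    then show "(fst x # snd x = fst y # snd y) = (x = y)" by (auto simp: prod_eq_iff)
  next
    fix x assume "x \<in> B \<times> ?L n" then show "fst x # snd x \<in> ?L (Suc n)" by auto
  next
    fix y assume "y \<in> ?L (Suc n)"
    then obtain a ys where "y = a # ys" "a \<in> B" "ys \<in> ?L n" by (cases y) auto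
    then show "\<exists>x\<in>B \<times> ?L n. y = fst x # snd x" by (intro bexI[of _ "(a, ys)"]) auto
  qed
  have "(\<integral>\<^sup>+ts. prod_list (map f ts) \<partial>count_space (?L (Suc n))) =
      (\<integral>\<^sup>+p. prod_list (map f (fst p # snd p)) \<partial>count_space (B \<times> ?L n))"
    by (rule nn_integral_bij_count_space[OF bij, symmetric])
  also have "\<dots> = (\<integral>\<^sup>+p. f (fst p) * prod_list (map f (snd p)) \<partial>count_space (B \<times> ?L n))" by simp
  also have "\<dots> = (\<integral>\<^sup>+x. f x \<partial>count_space B) * (\<integral>\<^sup>+ts. prod_list (map f ts) \<partial>count_space (?L n))"
    by (rule nn_integral_prod_count)
  finally show ?case using Suc.IH by simp
qed

lemma lists_decomp:
  fixes f :: "'a \<Rightarrow> ennreal" and \<rho> :: "nat \<Rightarrow> ennreal"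
  shows "(\<integral>\<^sup>+ts. \<rho> (length ts) * prod_list (map f ts) \<partial>count_space {ts. set ts \<subseteq> B}) =
    (\<Sum>n. \<rho> n * (\<integral>\<^sup>+x. f x \<partial>count_space B) ^ n)"
proof -
  have "(\<integral>\<^sup>+ts. \<rho> (length ts) * prod_list (map f ts) \<partial>count_space {ts. set ts \<subseteq> B}) =
     (\<Sum>n. \<integral>\<^sup>+ts. \<rho> (length ts) * prod_list (map f ts) \<partial>count_space {ts\<in>{ts. set ts \<subseteq> B}. length ts = n})"
    by (rule nn_integral_split_nat)
  also have "\<dots> = (\<Sum>n. \<rho> n * (\<integral>\<^sup>+x. f x \<partial>count_space B) ^ n)"
  proof (rule suminf_cong)
    fix n
    have "(\<integral>\<^sup>+ts. \<rho> (length ts) * prod_list (map f ts) \<partial>count_space {ts\<in>{ts. set ts \<subseteq> B}. length ts = n})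
      = (\<integral>\<^sup>+ts. \<rho> n * prod_list (map f ts) \<partial>count_space {ts. set ts \<subseteq> B \<and> length ts = n})"
    proof -
      have eq: "{ts \<in> {ts. set ts \<subseteq> B}. length ts = n} = {ts. set ts \<subseteq> B \<and> length ts = n}" by simp
      show ?thesis unfolding eq by (intro nn_integral_cong) simp
    qed
    also have "\<dots> = \<rho> n * (\<integral>\<^sup>+ts. prod_list (map f ts) \<partial>count_space {ts. set ts \<subseteq> B \<and> length ts = n})"
      by (rule nn_integral_cmult) simp
    finally show "(\<integral>\<^sup>+ts. \<rho> (length ts) * prod_list (map f ts) \<partial>count_space {ts\<in>{ts. set ts \<subseteq> B}. length ts = n})
      = \<rho> n * (\<integral>\<^sup>+x. f x \<partial>count_space B) ^ n" by (simp add: lists_len_power)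
  qed
  finally show ?thesis .
qed

lemma mk_bij:
  "bij_betw mk {ts. set ts \<subseteq> {t. plane_tree t} \<inter> A} {t. plane_tree t \<and> set (children t) \<subseteq> A}"
proof (rule bij_betwI')
  fix x y assume "x \<in> {ts. set ts \<subseteq> {t. plane_tree t} \<inter> A}" "y \<in> {ts. set ts \<subseteq> {t. plane_tree t} \<inter> A}"
  then have "\<forall>s\<in>set x. [] \<in> s" "\<forall>s\<in>set y. [] \<in> s" using plane_root by auto
  then show "(mk x = mk y) = (x = y)" using children_mk by metis
next
  fix x assume x: "x \<in> {ts. set ts \<subseteq> {t. plane_tree t} \<inter> A}"
  then have "\<forall>s\<in>set x. [] \<in> s" using plane_root by auto
  then show "mk x \<in> {t. plane_tree t \<and> set (children t) \<subseteq> A}"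
    using x plane_mk children_mk by auto
next
  fix y assume y: "y \<in> {t. plane_tree t \<and> set (children t) \<subseteq> A}"
  then have "mk (children y) = y" "set (children y) \<subseteq> {t. plane_tree t} \<inter> A"
    using mk_children plane_children by auto
  then show "\<exists>x\<in>{ts. set ts \<subseteq> {t. plane_tree t} \<inter> A}. y = mk x" by force
qed

lemma tree_decomp:
  fixes \<rho> :: "nat \<Rightarrow> ennreal"
  assumes F: "\<And>ts. \<forall>s\<in>set ts. plane_tree s \<Longrightarrow> F (mk ts) = \<rho> (length ts) * prod_list (map (\<lambda>x. ennreal (gw_weight mu x)) ts)"
  shows "(\<integral>\<^sup>+t. F t \<partial>count_space {t. plane_tree t \<and> set (children t) \<subseteq> A}) =
    (\<Sum>n. \<rho> n * (\<integral>\<^sup>+x. ennreal (gw_weight mu x) \<partial>count_space ({t. plane_tree t} \<inter> A)) ^ n)"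
proof -
  have "(\<integral>\<^sup>+t. F t \<partial>count_space {t. plane_tree t \<and> set (children t) \<subseteq> A}) =
      (\<integral>\<^sup>+ts. F (mk ts) \<partial>count_space {ts. set ts \<subseteq> {t. plane_tree t} \<inter> A})"
    by (rule nn_integral_bij_count_space[OF mk_bij, symmetric])
  also have "\<dots> = (\<integral>\<^sup>+ts. \<rho> (length ts) * prod_list (map (\<lambda>x. ennreal (gw_weight mu x)) ts) \<partial>count_space {ts. set ts \<subseteq> {t. plane_tree t} \<inter> A})"
    by (rule nn_integral_cong) (use F in auto)
  also have "\<dots> = (\<Sum>n. \<rho> n * (\<integral>\<^sup>+x. ennreal (gw_weight mu x) \<partial>count_space ({t. plane_tree t} \<inter> A)) ^ n)"
    by (rule lists_decomp)
  finally show ?thesis .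
qed




definition phi :: "nat pmf \<Rightarrow> ennreal \<Rightarrow> ennreal" where
  "phi mu x = (\<Sum>n. ennreal (pmf mu n) * x ^ n)"

definition Hh :: "nat \<Rightarrow> nat list set set" where
  "Hh h = {t. plane_tree t \<and> (\<forall>u\<in>t. length u < h)}"

lemma sum_pmf_ennreal: "(\<Sum>n. ennreal (pmf mu n)) = 1"
proof -
  have "(\<Sum>n. ennreal (pmf mu n)) = (\<integral>\<^sup>+n. ennreal (pmf mu n) \<partial>count_space UNIV)"
    by (rule nn_integral_count_space_nat[symmetric])
  also have "\<dots> = emeasure (measure_pmf mu) UNIV" by (rule nn_integral_pmf)
  also have "\<dots> = 1" using measure_pmf.emeasure_space_1[of mu] by simp
  finally show ?thesis .
qed

lemma phi_one: "phi mu 1 = 1" unfolding phi_def using sum_pmf_ennreal by simp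

lemma phi_mono: "x \<le> y \<Longrightarrow> phi mu x \<le> phi mu y"
  unfolding phi_def by (intro suminf_le mult_left_mono power_mono) simp_all

lemma gw_decomp_set:
  "(\<integral>\<^sup>+t. ennreal (gw_weight mu t) \<partial>count_space {t. plane_tree t \<and> set (children t) \<subseteq> A}) =
    phi mu (\<integral>\<^sup>+x. ennreal (gw_weight mu x) \<partial>count_space ({t. plane_tree t} \<inter> A))"
  unfolding phi_def by (rule tree_decomp) (rule gwE_mk)

lemma Hh_Suc: "{t. plane_tree t \<and> set (children t) \<subseteq> Hh h} = Hh (Suc h)"
proof safe
  fix t assume t: "plane_tree t" "set (children t) \<subseteq> Hh h"
  have "\<forall>u\<in>t. length u < Suc h"
  proof
    fix u assume u: "u \<in> t"
    then have "u \<in> mk (children t)" using mk_children[OF t(1)] by simp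
    from mk_cases[OF this] show "length u < Suc h"
    proof
      assume "\<exists>i w. u = Suc i # w \<and> i < length (children t) \<and> w \<in> children t ! i"
      then obtain i w where iw: "u = Suc i # w" "i < length (children t)" "w \<in> children t ! i" by blast
      have "children t ! i \<in> Hh h" using t(2) iw(2) nth_mem by blast
      then show ?thesis using iw by (simp add: Hh_def)
    qed simp
  qed
  then show "t \<in> Hh (Suc h)" using t(1) by (simp add: Hh_def)
next
  fix t assume "t \<in> Hh (Suc h)"
  then have t: "plane_tree t" "\<forall>u\<in>t. length u < Suc h" by (auto simp: Hh_def)
  then show "plane_tree t" by simp
  fix s assume s: "s \<in> set (children t)"
  then obtain i where i: "i < length (children t)" "s = children t ! i" by (metis in_set_conv_nth)
  have ps: "plane_tree s" using plane_children[OF t(1) s] .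
  have "\<forall>w\<in>s. length w < h"
  proof
    fix w assume "w \<in> s"
    then have "Suc i # w \<in> mk (children t)" using i by simp
    then have "Suc i # w \<in> t" using mk_children[OF t(1)] by simp
    then show "length w < h" using t(2) by fastforce
  qed
  then show "s \<in> Hh h" using ps by (simp add: Hh_def)
qed

lemma Wh_le_1: "(\<integral>\<^sup>+x. ennreal (gw_weight mu x) \<partial>count_space (Hh h)) \<le> 1"
proof (induction h)
  case 0
  have "Hh 0 = {}" by (auto simp: Hh_def dest: plane_root)
  then show ?case by (simp add: nn_integral_count_space_finite)
next
  case (Suc h)
  have "{t. plane_tree t} \<inter> Hh h = Hh h" by (auto simp: Hh_def)
  then have "(\<integral>\<^sup>+x. ennreal (gw_weight mu x) \<partial>count_space (Hh (Suc h))) =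
      phi mu (\<integral>\<^sup>+x. ennreal (gw_weight mu x) \<partial>count_space (Hh h))"
    using gw_decomp_set[where mu=mu and A="Hh h"] Hh_Suc[of h] by simp
  also have "\<dots> \<le> phi mu 1" using phi_mono Suc.IH by blast
  finally show ?case using phi_one by simp
qed

lemma plane_in_Hh: "plane_tree t \<Longrightarrow> \<exists>h. t \<in> Hh h"
proof -
  assume t: "plane_tree t"
  have "finite (length ` t)" using plane_finite[OF t] by simp
  then obtain h where "\<forall>x\<in>length ` t. x < h" using finite_nat_set_iff_bounded by blast
  then show ?thesis using t by (auto simp: Hh_def)
qed

lemma Hh_mono: "h \<le> h' \<Longrightarrow> Hh h \<subseteq> Hh h'"
  by (auto simp: Hh_def)

lemma W_le_1: "(\<integral>\<^sup>+x. ennreal (gw_weight mu x) \<partial>count_space {t. plane_tree t}) \<le> 1"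
proof -
  let ?f = "\<lambda>h x. ennreal (gw_weight mu x) * indicator (Hh h) x"
  have inc: "incseq ?f"
    by (intro incseq_SucI le_funI mult_left_mono) (auto simp: indicator_def Hh_def)
  have sup: "(SUP h. ?f h x) = ennreal (gw_weight mu x) * indicator {t. plane_tree t} x" for x
  proof (cases "plane_tree x")
    case True
    then obtain h0 where h0: "x \<in> Hh h0" using plane_in_Hh by blast
    show ?thesis
    proof (rule antisym)
      show "(SUP h. ?f h x) \<le> ennreal (gw_weight mu x) * indicator {t. plane_tree t} x"
        using True by (intro SUP_least) (auto simp: indicator_def)
      have "?f h0 x \<le> (SUP h. ?f h x)" by (rule SUP_upper) simp
      then show "ennreal (gw_weight mu x) * indicator {t. plane_tree t} x \<le> (SUP h. ?f h x)"
        using h0 True by (simp add: indicator_def)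
    qed
  next
    case False
    then have "x \<notin> Hh h" for h by (simp add: Hh_def)
    then show ?thesis using False by (simp add: indicator_def)
  qed
  have "(\<integral>\<^sup>+x. ennreal (gw_weight mu x) \<partial>count_space {t. plane_tree t}) =
      (\<integral>\<^sup>+x. ennreal (gw_weight mu x) * indicator {t. plane_tree t} x \<partial>count_space UNIV)"
    by (rule nn_integral_count_space_indicator) simp
  also have "\<dots> = (\<integral>\<^sup>+x. (SUP h. ?f h x) \<partial>count_space UNIV)" using sup by simp
  also have "\<dots> = (SUP h. \<integral>\<^sup>+x. ?f h x \<partial>count_space UNIV)"
    by (rule nn_integral_monotone_convergence_SUP[OF inc]) simp
  also have "\<dots> \<le> 1"
  proof (rule SUP_least)
    fix h
    have "(\<integral>\<^sup>+x. ?f h x \<partial>count_space UNIV) = (\<integral>\<^sup>+x. ennreal (gw_weight mu x) \<partial>count_space (Hh h))"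
      by (rule nn_integral_count_space_indicator[symmetric]) simp
    then show "(\<integral>\<^sup>+x. ?f h x \<partial>count_space UNIV) \<le> 1" using Wh_le_1 by simp
  qed
  finally show ?thesis .
qed

lemma W_fix: "phi mu (\<integral>\<^sup>+x. ennreal (gw_weight mu x) \<partial>count_space {t. plane_tree t}) =
   (\<integral>\<^sup>+x. ennreal (gw_weight mu x) \<partial>count_space {t. plane_tree t})"
proof -
  have e: "{t. plane_tree t \<and> set (children t) \<subseteq> UNIV} = {t. plane_tree t}" by simp
  from gw_decomp_set[where mu=mu and A=UNIV]
  have "(\<integral>\<^sup>+x. ennreal (gw_weight mu x) \<partial>count_space {t. plane_tree t}) =
     phi mu (\<integral>\<^sup>+x. ennreal (gw_weight mu x) \<partial>count_space {t. plane_tree t})"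
    unfolding e Int_UNIV_right .
  then show ?thesis by (rule sym)
qed

lemma strict_bernoulli:
  fixes w :: real
  assumes "0 \<le> w" "w < 1" "2 \<le> k"
  shows "1 + real k * (w - 1) < w ^ k"
proof -
  obtain m where k: "k = Suc m" and m: "1 \<le> m" using assms(3) by (cases k) auto
  have bern: "1 + real n * (w - 1) \<le> w ^ n" for n
  proof (induction n)
    case (Suc n)
    have "(1 + real n * (w - 1)) * w - (1 + real (Suc n) * (w - 1)) = real n * (w - 1)^2"
      by (simp add: algebra_simps power2_eq_square)
    moreover have "0 \<le> real n * (w - 1)^2" by simp
    ultimately have "1 + real (Suc n) * (w - 1) \<le> (1 + real n * (w - 1)) * w" by linarith
    also have "\<dots> \<le> w ^ n * w" using Suc.IH assms(1) by (rule mult_right_mono)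
    finally show ?case by (simp add: mult.commute)
  qed simp
  have "1 + real k * (w - 1) < (1 + real m * (w - 1)) * w"
  proof -
    have "(1 + real m * (w - 1)) * w - (1 + real k * (w - 1)) = real m * (w - 1)^2"
      using k by (simp add: algebra_simps power2_eq_square)
    moreover have "0 < real m * (w - 1)^2" using m assms(2) by simp
    ultimately show ?thesis by linarith
  qed
  also have "\<dots> \<le> w ^ m * w" using bern[of m] assms(1) by (rule mult_right_mono)
  finally show ?thesis using k by (simp add: mult.commute)
qed

lemma pmf_facts:
  "summable (pmf mu)" "suminf (pmf mu) = 1"
proof -
  have ne: "(\<Sum>n. ennreal (pmf mu n)) \<noteq> top" using sum_pmf_ennreal by simp
  show s: "summable (pmf mu)" by (rule summable_suminf_not_top) (simp_all add: ne)
  have "ennreal (suminf (pmf mu)) = 1" using suminf_ennreal2[of "pmf mu", OF pmf_nonneg s] sum_pmf_ennreal by simp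
  then show "suminf (pmf mu) = 1" by simp
qed

lemma exists_big:
  assumes critical: "(\<lambda>k. real k * pmf mu k) sums 1" and nondeg: "pmf mu 1 \<noteq> 1"
  shows "\<exists>k\<ge>2. 0 < pmf mu k"
proof (rule ccontr)
  assume "\<not> ?thesis"
  then have z: "\<And>k. 2 \<le> k \<Longrightarrow> pmf mu k = 0" using pmf_nonneg by (metis less_eq_real_def)
  have "(\<lambda>k. real k * pmf mu k) sums (\<Sum>k\<in>{1}. real k * pmf mu k)"
  proof (rule sums_finite)
    fix k assume "k \<notin> {1::nat}"
    then have "k = 0 \<or> 2 \<le> k" by auto
    then show "real k * pmf mu k = 0" using z by auto
  qed simp
  then have "pmf mu 1 = 1" using critical sums_unique2 by fastforce
  then show False using nondeg by simp
qed

lemma W_eq_1: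
  assumes critical: "(\<lambda>k. real k * pmf mu k) sums 1" and nondeg: "pmf mu 1 \<noteq> 1"
  shows "(\<integral>\<^sup>+x. ennreal (gw_weight mu x) \<partial>count_space {t. plane_tree t}) = 1"
proof -
  let ?W = "\<integral>\<^sup>+x. ennreal (gw_weight mu x) \<partial>count_space {t. plane_tree t}"
  have le: "?W \<le> 1" by (rule W_le_1)
  then obtain w where w: "?W = ennreal w" "0 \<le> w" "w \<le> 1"
    by (cases ?W) (auto simp: top_unique)
  have sp: "summable (pmf mu)" and sp1: "suminf (pmf mu) = 1" using pmf_facts by auto
  have sw: "summable (\<lambda>n. pmf mu n * w ^ n)"
    by (rule summable_comparison_test[OF _ sp])
       (use w in \<open>auto intro!: exI[of _ 0] simp: abs_mult mult_left_le power_le_one\<close>)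
  have "phi mu (ennreal w) = (\<Sum>n. ennreal (pmf mu n * w ^ n))"
    unfolding phi_def using w(2) by (simp add: ennreal_mult ennreal_power)
  also have "\<dots> = ennreal (\<Sum>n. pmf mu n * w ^ n)"
    by (rule suminf_ennreal2) (use w(2) sw in auto)
  finally have "ennreal (\<Sum>n. pmf mu n * w ^ n) = ennreal w" using W_fix[where mu=mu] w(1) by simp
  then have fx: "(\<Sum>n. pmf mu n * w ^ n) = w"
    using w(2) by (subst (asm) ennreal_inj) (auto intro!: suminf_nonneg sw)
  show ?thesis
  proof (rule ccontr)
    assume "?W \<noteq> 1"
    then have w1: "w < 1" using w by auto
    define d where "d n = pmf mu n * (w ^ n - 1 - real n * (w - 1))" for n
    have dnn: "0 \<le> d n" for n
    proof -
      have b: "1 + real n * (w - 1) \<le> w ^ n"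
      proof (cases "2 \<le> n")
        case True then show ?thesis using strict_bernoulli[OF w(2) w1 True] by simp
      next
        case False then have "n = 0 \<or> n = 1" by auto
        then show ?thesis by auto
      qed
      then show ?thesis unfolding d_def by (intro mult_nonneg_nonneg) simp_all
    qed
    have crit: "summable (\<lambda>k. real k * pmf mu k)" "(\<Sum>k. real k * pmf mu k) = 1"
      using critical by (auto simp: sums_iff)
    have dsum: "d sums (w - 1 - (w - 1) * 1)"
    proof -
      have "(\<lambda>n. pmf mu n * w ^ n - pmf mu n - (w - 1) * (real n * pmf mu n)) sums (w - 1 - (w - 1) * 1)"
        by (intro sums_diff sums_mult) (use sw fx sp sp1 critical in \<open>auto simp: sums_iff\<close>)
      moreover have "(\<lambda>n. pmf mu n * w ^ n - pmf mu n - (w - 1) * (real n * pmf mu n)) = d"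
        unfolding d_def by (auto simp: algebra_simps)
      ultimately show ?thesis by simp
    qed
    then have "suminf d = 0" "summable d" by (auto simp: sums_iff)
    then have d0: "\<And>n. d n = 0" using suminf_eq_zero_iff dnn by blast
    obtain k where k: "2 \<le> k" "0 < pmf mu k" using exists_big[OF critical nondeg] by blast
    have "0 < w ^ k - 1 - real k * (w - 1)" using strict_bernoulli[OF w(2) w1 k(1)] by simp
    then have "0 < d k" unfolding d_def using k(2) by simp
    then show False using d0 by simp
  qed
qed




lemma sum_tail:
  assumes critical: "(\<lambda>k. real k * pmf mu k) sums 1"
  shows "(\<Sum>n. ennreal (measure_pmf.prob mu {Suc n..})) = 1"
proof -
  have "(\<Sum>n. ennreal (measure_pmf.prob mu {Suc n..})) = (\<Sum>n. \<integral>\<^sup>+k. indicator {Suc n..} k \<partial>measure_pmf mu)"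
    by (simp add: measure_pmf.emeasure_eq_measure)
  also have "\<dots> = (\<integral>\<^sup>+k. (\<Sum>n. indicator {Suc n..} k) \<partial>measure_pmf mu)"
    by (rule nn_integral_suminf[symmetric]) simp
  also have "\<dots> = (\<integral>\<^sup>+k. of_nat k \<partial>measure_pmf mu)"
  proof (rule nn_integral_cong)
    fix k :: nat
    have "(\<Sum>n. indicator {Suc n..} k :: ennreal) = (\<Sum>n\<in>{..<k}. indicator {Suc n..} k)"
      by (rule suminf_finite) (auto simp: indicator_def)
    also have "\<dots> = (\<Sum>n\<in>{..<k}. 1)" by (intro sum.cong) (auto simp: indicator_def)
    finally show "(\<Sum>n. indicator {Suc n..} k :: ennreal) = of_nat k" by simp
  qed
  also have "\<dots> = (\<integral>\<^sup>+k. ennreal (pmf mu k) * of_nat k \<partial>count_space UNIV)"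
    by (rule nn_integral_measure_pmf)
  also have "\<dots> = (\<Sum>k. ennreal (pmf mu k) * of_nat k)"
    by (rule nn_integral_count_space_nat)
  also have "\<dots> = (\<Sum>k. ennreal (real k * pmf mu k))"
    by (intro suminf_cong) (simp add: ennreal_mult ennreal_of_nat_eq_real_of_nat mult.commute)
  also have "\<dots> = ennreal (\<Sum>k. real k * pmf mu k)"
    by (rule suminf_ennreal2) (use critical in \<open>auto simp: sums_iff\<close>)
  also have "\<dots> = 1" using critical by (simp add: sums_iff)
  finally show ?thesis .
qed

lemma swE_mk': "\<forall>s\<in>set ts. plane_tree s \<Longrightarrow> ennreal (spine_w mu (mk ts)) =
   (\<lambda>n. ennreal (measure_pmf.prob mu {Suc n..})) (length ts) * prod_list (map (\<lambda>x. ennreal (gw_weight mu x)) ts)"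
  using swE_mk by simp

lemma S_total:
  assumes critical: "(\<lambda>k. real k * pmf mu k) sums 1" and nondeg: "pmf mu 1 \<noteq> 1"
  shows "(\<integral>\<^sup>+x. ennreal (spine_w mu x) \<partial>count_space {t. plane_tree t}) = 1"
proof -
  have e: "{t. plane_tree t \<and> set (children t) \<subseteq> UNIV} = {t. plane_tree t}" by simp
  from tree_decomp[where F="\<lambda>t. ennreal (spine_w mu t)" and A=UNIV and mu=mu, OF swE_mk']
  have "(\<integral>\<^sup>+x. ennreal (spine_w mu x) \<partial>count_space {t. plane_tree t}) =
     (\<Sum>n. ennreal (measure_pmf.prob mu {Suc n..}) * (\<integral>\<^sup>+x. ennreal (gw_weight mu x) \<partial>count_space {t. plane_tree t}) ^ n)"
    unfolding e Int_UNIV_right .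
  also have "\<dots> = (\<Sum>n. ennreal (measure_pmf.prob mu {Suc n..}))"
    using W_eq_1[OF critical nondeg] by simp
  also have "\<dots> = 1" using sum_tail[OF critical] .
  finally show ?thesis .
qed

lemma emeasure_GW: "emeasure (GW mu) A = (\<integral>\<^sup>+t. ennreal (gw_weight mu t) \<partial>count_space ({t. plane_tree t} \<inter> A))"
proof -
  have "emeasure (GW mu) A = (\<integral>\<^sup>+t. (if plane_tree t then ennreal (gw_weight mu t) else 0) * indicator A t \<partial>count_space UNIV)"
    unfolding GW_def by (rule emeasure_density) simp_all
  also have "\<dots> = (\<integral>\<^sup>+t. ennreal (gw_weight mu t) * indicator ({t. plane_tree t} \<inter> A) t \<partial>count_space UNIV)"
    by (rule nn_integral_cong) (simp add: indicator_def)
  also have "\<dots> = (\<integral>\<^sup>+t. ennreal (gw_weight mu t) \<partial>count_space ({t. plane_tree t} \<inter> A))"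
    by (rule nn_integral_count_space_indicator[symmetric]) simp
  finally show ?thesis .
qed

lemma emeasure_GWs: "emeasure (GW_spine mu) A = (\<integral>\<^sup>+t. ennreal (spine_w mu t) \<partial>count_space ({t. plane_tree t} \<inter> A))"
proof -
  have "emeasure (GW_spine mu) A = (\<integral>\<^sup>+t. (if plane_tree t then ennreal (spine_w mu t) else 0) * indicator A t \<partial>count_space UNIV)"
    unfolding GW_spine_def spine_w_def by (rule emeasure_density) simp_all
  also have "\<dots> = (\<integral>\<^sup>+t. ennreal (spine_w mu t) * indicator ({t. plane_tree t} \<inter> A) t \<partial>count_space UNIV)"
    by (rule nn_integral_cong) (simp add: indicator_def)
  also have "\<dots> = (\<integral>\<^sup>+t. ennreal (spine_w mu t) \<partial>count_space ({t. plane_tree t} \<inter> A))"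
    by (rule nn_integral_count_space_indicator[symmetric]) simp
  finally show ?thesis .
qed

lemma sets_GW[simp]: "sets (GW mu) = UNIV" and space_GW[simp]: "space (GW mu) = UNIV"
  and sets_GWs[simp]: "sets (GW_spine mu) = UNIV" and space_GWs[simp]: "space (GW_spine mu) = UNIV"
  by (simp_all add: GW_def GW_spine_def)

lemma prob_GW:
  assumes critical: "(\<lambda>k. real k * pmf mu k) sums 1" and nondeg: "pmf mu 1 \<noteq> 1"
  shows "prob_space (GW mu)" "prob_space (GW_spine mu)"
proof -
  show "prob_space (GW mu)"
    by (rule prob_spaceI) (simp add: emeasure_GW W_eq_1[OF critical nondeg])
  show "prob_space (GW_spine mu)"
    by (rule prob_spaceI) (simp add: emeasure_GWs S_total[OF critical nondeg])
qed

lemma tail_split: "ennreal (measure_pmf.prob mu {Suc k..}) = ennreal (pmf mu (Suc k)) + ennreal (measure_pmf.prob mu {Suc (Suc k)..})"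
proof -
  have "emeasure (measure_pmf mu) {Suc k} + emeasure (measure_pmf mu) {Suc (Suc k)..} =
      emeasure (measure_pmf mu) ({Suc k} \<union> {Suc (Suc k)..})"
    by (rule plus_emeasure) auto
  also have "{Suc k} \<union> {Suc (Suc k)..} = {Suc k..}" by auto
  finally show ?thesis
    by (simp add: measure_pmf.emeasure_eq_measure emeasure_pmf_single[symmetric])
qed

lemma pointwise:
  assumes s: "plane_tree s" and r: "plane_tree r"
  shows "ennreal (gw_weight mu (beta (s, r))) + ennreal (spine_w mu (beta (s, r))) =
    ennreal (gw_weight mu s) * ennreal (spine_w mu r)"
proof -
  have cr: "\<forall>x\<in>set (children r). plane_tree x" using plane_children[OF r] by blast
  have all: "\<forall>x\<in>set (s # children r). plane_tree x" using cr s by simp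
  let ?P = "prod_list (map (\<lambda>x. ennreal (gw_weight mu x)) (children r))"
  let ?g = "ennreal (gw_weight mu s)"
  let ?k = "length (children r)"
  have g: "ennreal (gw_weight mu (beta (s, r))) = ennreal (pmf mu (Suc ?k)) * (?g * ?P)"
    unfolding beta_def using gwE_mk[OF all] by simp
  have sw: "ennreal (spine_w mu (beta (s, r))) = ennreal (measure_pmf.prob mu {Suc (Suc ?k)..}) * (?g * ?P)"
    unfolding beta_def using swE_mk[OF all] by simp
  have sr: "ennreal (spine_w mu r) = ennreal (measure_pmf.prob mu {Suc ?k..}) * ?P"
    using swE_mk[OF cr, of mu] mk_children[OF r] by simp
  show ?thesis unfolding g sw sr tail_split[of mu ?k]
    by (simp add: algebra_simps)
qed

lemma beta_img:
  "bij_betw beta (({t. plane_tree t} \<inter> A) \<times> ({t. plane_tree t} \<inter> B))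
     ({t. plane_tree t} \<inter> {t. 1 \<le> kids t [] \<and> subtree t [1] \<in> A \<and> reduced t \<in> B})"
proof (rule bij_betw_subset[OF beta_bij])
  show "({t. plane_tree t} \<inter> A) \<times> ({t. plane_tree t} \<inter> B) \<subseteq> Collect plane_tree \<times> Collect plane_tree" by auto
  show "beta ` (({t. plane_tree t} \<inter> A) \<times> ({t. plane_tree t} \<inter> B)) =
     {t. plane_tree t} \<inter> {t. 1 \<le> kids t [] \<and> subtree t [1] \<in> A \<and> reduced t \<in> B}"
  proof safe
    fix s r assume "s \<in> A" "plane_tree s" "r \<in> B" "plane_tree r"
    then show "plane_tree (beta (s, r))" "1 \<le> kids (beta (s, r)) []" "subtree (beta (s, r)) [1] \<in> A"
      "reduced (beta (s, r)) \<in> B" using beta_props by auto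
  next
    fix t assume t: "plane_tree t" "1 \<le> kids t []" "subtree t [1] \<in> A" "reduced t \<in> B"
    then have "t \<in> beta ` (Collect plane_tree \<times> Collect plane_tree)"
      using beta_bij by (auto simp: bij_betw_def)
    then obtain s r where sr: "plane_tree s" "plane_tree r" "t = beta (s, r)" by auto
    then have "s \<in> A" "r \<in> B" using t beta_props by auto
    then show "t \<in> beta ` (({t. plane_tree t} \<inter> A) \<times> ({t. plane_tree t} \<inter> B))"
      using sr by auto
  qed
qed

lemma core_identity:
  "emeasure (GW mu) {t. 1 \<le> kids t [] \<and> subtree t [1] \<in> A \<and> reduced t \<in> B}
   + emeasure (GW_spine mu) {t. 1 \<le> kids t [] \<and> subtree t [1] \<in> A \<and> reduced t \<in> B}
   = emeasure (GW mu) A * emeasure (GW_spine mu) B"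
proof -
  let ?C = "{t. plane_tree t} \<inter> {t. 1 \<le> kids t [] \<and> subtree t [1] \<in> A \<and> reduced t \<in> B}"
  let ?AB = "({t. plane_tree t} \<inter> A) \<times> ({t. plane_tree t} \<inter> B)"
  have "emeasure (GW mu) {t. 1 \<le> kids t [] \<and> subtree t [1] \<in> A \<and> reduced t \<in> B}
   + emeasure (GW_spine mu) {t. 1 \<le> kids t [] \<and> subtree t [1] \<in> A \<and> reduced t \<in> B}
   = (\<integral>\<^sup>+t. ennreal (gw_weight mu t) + ennreal (spine_w mu t) \<partial>count_space ?C)"
    unfolding emeasure_GW emeasure_GWs by (rule nn_integral_add[symmetric]) simp_all
  also have "\<dots> = (\<integral>\<^sup>+p. ennreal (gw_weight mu (beta p)) + ennreal (spine_w mu (beta p)) \<partial>count_space ?AB)"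
    by (rule nn_integral_bij_count_space[OF beta_img, symmetric])
  also have "\<dots> = (\<integral>\<^sup>+p. ennreal (gw_weight mu (fst p)) * ennreal (spine_w mu (snd p)) \<partial>count_space ?AB)"
  proof (rule nn_integral_cong)
    fix p assume "p \<in> space (count_space ?AB)"
    then obtain s r where "p = (s, r)" "plane_tree s" "plane_tree r" by auto
    then show "ennreal (gw_weight mu (beta p)) + ennreal (spine_w mu (beta p)) =
        ennreal (gw_weight mu (fst p)) * ennreal (spine_w mu (snd p))" using pointwise by simp
  qed
  also have "\<dots> = emeasure (GW mu) A * emeasure (GW_spine mu) B"
    unfolding emeasure_GW emeasure_GWs by (rule nn_integral_prod_count)
  finally show ?thesis .
qed

lemma triv_tree: "plane_tree t \<Longrightarrow> kids t [] = 0 \<Longrightarrow> t = {[]}"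
proof -
  assume t: "plane_tree t" "kids t [] = 0"
  then have "children t = []" by (simp add: children_def)
  then show "t = {[]}" using mk_children[OF t(1)] by (simp add: mk_def)
qed

lemma plane_single: "plane_tree {[]}"
proof -
  have "mk [] = {[]}" by (simp add: mk_def)
  then show ?thesis using plane_mk[of "[]"] by simp
qed

lemma kids_single: "kids {[]} [] = 0" by (simp add: kids_def)

lemma triv_set: "{t. plane_tree t} \<inter> {t. kids t [] = 0} = {{[]}}"
proof
  show "{t. plane_tree t} \<inter> {t. kids t [] = 0} \<subseteq> {{[]}}" using triv_tree by blast
  show "{{[]}} \<subseteq> {t. plane_tree t} \<inter> {t. kids t [] = 0}" using plane_single kids_single by simp
qed

lemma GW_triv: "emeasure (GW mu) {t. kids t [] = 0} = ennreal (pmf mu 0)"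
proof -
  have "{t. plane_tree t} \<inter> {t. kids t [] = 0} = {{[]}}" by (rule triv_set)
  then show ?thesis unfolding emeasure_GW
    by (simp add: nn_integral_count_space_finite gw_weight_def kids_single)
qed

lemma GWs_triv: "emeasure (GW_spine mu) {t. kids t [] = 0} = ennreal (1 - pmf mu 0)"
proof -
  have "{t. plane_tree t} \<inter> {t. kids t [] = 0} = {{[]}}" by (rule triv_set)
  moreover have "measure_pmf.prob mu {Suc 0..} = 1 - pmf mu 0"
  proof -
    have "{Suc 0..} = space (measure_pmf mu) - {0}" by auto
    then show ?thesis using measure_pmf.prob_compl[of "{0}" mu] by (simp add: measure_pmf_single)
  qed
  ultimately show ?thesis unfolding emeasure_GWs
    by (simp add: nn_integral_count_space_finite spine_w_def kids_single)
qed

lemma pmf0_pos: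
  assumes critical: "(\<lambda>k. real k * pmf mu k) sums 1" and nondeg: "pmf mu 1 \<noteq> 1"
  shows "0 < pmf mu 0"
proof (rule ccontr)
  assume "\<not> 0 < pmf mu 0"
  then have p0: "pmf mu 0 = 0" using pmf_nonneg[of mu 0] by linarith
  define e where "e k = real k * pmf mu k - pmf mu k" for k
  have "e sums (1 - 1)" unfolding e_def
    using sums_diff[OF critical] pmf_facts[of mu] by (simp add: sums_iff)
  then have es: "summable e" "suminf e = 0" by (auto simp: sums_iff)
  have enn: "0 \<le> e k" for k
  proof (cases k)
    case 0 then show ?thesis using p0 by (simp add: e_def)
  next
    case (Suc m)
    have "pmf mu k \<le> real k * pmf mu k" using Suc pmf_nonneg[of mu k] by (simp add: algebra_simps)
    then show ?thesis by (simp add: e_def)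
  qed
  then have e0: "\<And>k. e k = 0" using es suminf_eq_zero_iff by blast
  obtain k where k: "2 \<le> k" "0 < pmf mu k" using exists_big[OF critical nondeg] by blast
  have "pmf mu k < real k * pmf mu k" using k by simp
  then have "0 < e k" by (simp add: e_def)
  then show False using e0 by simp
qed




lemma first_nontriv_eq:
  assumes "1 \<le> kids (f m) []" "\<forall>i<m. kids (f i) [] = 0"
  shows "first_nontriv f = m"
  unfolding first_nontriv_def
proof (rule Least_equality)
  show "1 \<le> kids (f m) []" by fact
  fix y assume y: "1 \<le> kids (f y) []"
  show "m \<le> y"
  proof (rule ccontr)
    assume "\<not> m \<le> y"
    then have "kids (f y) [] = 0" using assms(2) by simp
    then show False using y by simp
  qed
qed

lemma tau_unfold: "tau f i = (if i = 0 then subtree (f (first_nontriv f)) [1]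
    else if i = 1 then reduced (f (first_nontriv f)) else f (i + first_nontriv f - 1))"
  by (simp add: tau_def Let_def)

lemma first_nontriv_ex:
  assumes "\<exists>i. 1 \<le> kids (f i) []"
  shows "1 \<le> kids (f (first_nontriv f)) []" "\<forall>i<first_nontriv f. kids (f i) [] = 0"
proof -
  show "1 \<le> kids (f (first_nontriv f)) []" unfolding first_nontriv_def using assms by (rule LeastI_ex)
  show "\<forall>i<first_nontriv f. kids (f i) [] = 0"
  proof (intro allI impI)
    fix i assume "i < first_nontriv f"
    then have "\<not> 1 \<le> kids (f i) []" unfolding first_nontriv_def by (rule not_less_Least)
    then show "kids (f i) [] = 0" by simp
  qed
qed

definition Ms :: "nat pmf \<Rightarrow> nat \<Rightarrow> nat list set measure" where
  "Ms mu i = (if i = 0 then GW mu else GW_spine mu)"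

lemma tree_product_Ms: "tree_product mu = PiM UNIV (Ms mu)"
  unfolding tree_product_def Ms_def by simp

lemma sets_Ms[simp]: "sets (Ms mu i) = UNIV" and space_Ms[simp]: "space (Ms mu i) = UNIV"
  by (simp_all add: Ms_def)

lemma space_TP[simp]: "space (tree_product mu) = UNIV"
  by (auto simp: tree_product_Ms space_PiM PiE_def Pi_def extensional_def)

lemma space_PiM_Ms[simp]: "space (PiM UNIV (Ms mu)) = UNIV"
  using space_TP[of mu] unfolding tree_product_Ms .

lemma meas_Ms: "H \<in> measurable (Ms mu i) (count_space UNIV)"
  by (simp add: measurable_def)

lemma meas_into_Ms: "H \<in> measurable (tree_product mu) (Ms mu j) \<longleftrightarrow> H \<in> measurable (tree_product mu) (count_space UNIV)"
  using measurable_cong_sets[of "tree_product mu" "tree_product mu" "Ms mu j" "count_space UNIV"] by simp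

lemma meas_coord: "(\<lambda>f. H (f i)) \<in> measurable (tree_product mu) (count_space UNIV)"
proof -
  have "(\<lambda>f. f i) \<in> measurable (tree_product mu) (Ms mu i)"
    unfolding tree_product_Ms by (rule measurable_component_singleton) simp
  then show ?thesis using meas_Ms by (rule measurable_compose)
qed

lemma sets_coord: "{f. P (f i)} \<in> sets (tree_product mu)"
proof -
  have "(\<lambda>f. P (f i)) -` {True} \<inter> space (tree_product mu) \<in> sets (tree_product mu)"
    by (rule measurable_sets[OF meas_coord]) simp
  moreover have "(\<lambda>f. P (f i)) -` {True} \<inter> space (tree_product mu) = {f. P (f i)}" by auto
  ultimately show ?thesis by simp
qed

lemma TP_All: "(\<And>i. {x. P i x} \<in> sets (tree_product mu)) \<Longrightarrow> {x. \<forall>i::nat. P i x} \<in> sets (tree_product mu)"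
  using sets.sets_Collect_countable_All[of "tree_product mu" P] by simp

lemma TP_Ex: "(\<And>i. {x. P i x} \<in> sets (tree_product mu)) \<Longrightarrow> {x. \<exists>i::nat. P i x} \<in> sets (tree_product mu)"
  using sets.sets_Collect_countable_Ex[of "tree_product mu" P] by simp

lemma TP_Ball: "(\<And>i. i \<in> I \<Longrightarrow> {x. P i x} \<in> sets (tree_product mu)) \<Longrightarrow> {x. \<forall>i\<in>(I::nat set). P i x} \<in> sets (tree_product mu)"
  using sets.sets_Collect_countable_All'[of I "tree_product mu" P] by simp

lemma TP_conj: "{x. P x} \<in> sets (tree_product mu) \<Longrightarrow> {x. Q x} \<in> sets (tree_product mu) \<Longrightarrow> {x. P x \<and> Q x} \<in> sets (tree_product mu)"
proof -
  assume "{x. P x} \<in> sets (tree_product mu)" "{x. Q x} \<in> sets (tree_product mu)"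
  then have "{x. P x} \<inter> {x. Q x} \<in> sets (tree_product mu)" by blast
  moreover have "{x. P x} \<inter> {x. Q x} = {x. P x \<and> Q x}" by blast
  ultimately show ?thesis by simp
qed

lemma meas_first_nontriv: "first_nontriv \<in> measurable (tree_product mu) (count_space UNIV)"
proof -
  have "(\<lambda>f. LEAST i. 1 \<le> kids (f i) []) \<in> measurable (tree_product mu) (count_space UNIV)"
    by (rule measurable_Least) (rule meas_coord)
  then show ?thesis unfolding first_nontriv_def[abs_def] .
qed

lemma meas_tau: "tau \<in> measurable (tree_product mu) (tree_product mu)"
proof -
  have "(\<lambda>\<omega> i. tau \<omega> i) \<in> measurable (tree_product mu) (PiM UNIV (Ms mu))"
  proof (rule measurable_PiM_single')
    fix i :: nat
    have "(\<lambda>f. (\<lambda>m f. if i = 0 then subtree (f m) [1] else if i = 1 then reduced (f m) else f (i + m - 1)) (first_nontriv f) f)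
        \<in> measurable (tree_product mu) (count_space UNIV)"
    proof (rule measurable_compose_countable[OF _ meas_first_nontriv])
      fix m :: nat
      show "(\<lambda>f. if i = 0 then subtree (f m) [1] else if i = 1 then reduced (f m) else f (i + m - 1))
          \<in> measurable (tree_product mu) (count_space UNIV)"
      proof (cases "i = 0")
        case True then show ?thesis using meas_coord[of "\<lambda>t. subtree t [1]" m mu] by simp
      next
        case False
        show ?thesis
        proof (cases "i = 1")
          case True then show ?thesis using meas_coord[of reduced m mu] by simp
        next
          case False
          then show ?thesis using \<open>i \<noteq> 0\<close> meas_coord[of "\<lambda>t. t" "i + m - 1" mu] by simp
        qed
      qed
    qed
    then show "(\<lambda>f. tau f i) \<in> measurable (tree_product mu) (Ms mu i)"
      unfolding meas_into_Ms by (simp add: tau_unfold)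
  qed simp
  then show ?thesis unfolding tree_product_Ms[symmetric] by simp
qed

lemma infinite_trees_char:
  "infinite_trees = {f. (\<forall>i. plane_tree (f i)) \<and> (\<forall>N. \<exists>i. N \<le> i \<and> (\<exists>u\<in>f i. u \<noteq> []))}"
proof (intro set_eqI iffI)
  fix f :: "nat \<Rightarrow> nat list set" assume "f \<in> infinite_trees"
  then have pl: "\<forall>i. plane_tree (f i)" and inf: "infinite (\<Union>i. {(i, u) | u. u \<in> f i \<and> u \<noteq> []})"
    by (auto simp: infinite_trees_def)
  have "\<forall>N. \<exists>i. N \<le> i \<and> (\<exists>u\<in>f i. u \<noteq> [])"
  proof (rule ccontr)
    assume "\<not> ?thesis"
    then obtain N where N: "\<forall>i. N \<le> i \<longrightarrow> (\<forall>u\<in>f i. u = [])" by blast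
    have "(\<Union>i. {(i, u) | u. u \<in> f i \<and> u \<noteq> []}) \<subseteq> (\<Union>i<N. {i} \<times> f i)"
    proof
      fix x assume "x \<in> (\<Union>i. {(i, u) | u. u \<in> f i \<and> u \<noteq> []})"
      then obtain i u where x: "x = (i, u)" "u \<in> f i" "u \<noteq> []" by blast
      then have "i < N" using N by (meson not_le)
      then show "x \<in> (\<Union>i<N. {i} \<times> f i)" using x by blast
    qed
    moreover have "finite (\<Union>i<N. {i} \<times> f i)" using pl plane_finite by blast
    ultimately show False using inf finite_subset by blast
  qed
  then show "f \<in> {f. (\<forall>i. plane_tree (f i)) \<and> (\<forall>N. \<exists>i. N \<le> i \<and> (\<exists>u\<in>f i. u \<noteq> []))}" using pl by blast
next
  fix f :: "nat \<Rightarrow> nat list set" assume "f \<in> {f. (\<forall>i. plane_tree (f i)) \<and> (\<forall>N. \<exists>i. N \<le> i \<and> (\<exists>u\<in>f i. u \<noteq> []))}"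
  then have pl: "\<forall>i. plane_tree (f i)" and ex: "\<forall>N. \<exists>i. N \<le> i \<and> (\<exists>u\<in>f i. u \<noteq> [])" by auto
  have "infinite (\<Union>i. {(i, u) | u. u \<in> f i \<and> u \<noteq> []})"
  proof
    let ?U = "\<Union>i. {(i, u) | u. u \<in> f i \<and> u \<noteq> []}"
    assume fin: "finite ?U"
    then have "finite (fst ` ?U)" by (rule finite_imageI)
    from finite_nat_set_iff_bounded[THEN iffD1, OF this]
    obtain N where N: "\<forall>n\<in>fst ` ?U. n < N" by (elim exE)
    obtain i u where iu: "N \<le> i" "u \<in> f i" "u \<noteq> []" using ex by blast
    have "(i, u) \<in> ?U" using iu by blast
    then have "i \<in> fst ` ?U" by (rule image_eqI[rotated]) simp
    then have "i < N" using N by blast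
    then show False using iu(1) by simp
  qed
  then show "f \<in> infinite_trees" using pl by (simp add: infinite_trees_def)
qed

lemma plane_nonroot_kids:
  assumes "plane_tree t" "u \<in> t" "u \<noteq> []" shows "1 \<le> kids t []"
proof -
  obtain x w where u: "u = x # w" using assms(3) by (cases u) auto
  have "[] @ [x] \<in> t" using plane_prefix[OF assms(1,2)] u by simp
  then show ?thesis using plane_child_iff[OF assms(1) plane_root[OF assms(1)]] by simp
qed

lemma kids_no_nonroot: "\<forall>u\<in>t. u = [] \<Longrightarrow> kids t [] = 0"
proof -
  assume a: "\<forall>u\<in>t. u = []"
  have "{j. [] @ [j] \<in> t} = {}"
  proof safe
    fix j assume "[] @ [j] \<in> t" then show "j \<in> {}" using a by fastforce
  qed
  then show ?thesis by (simp add: kids_def)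
qed

lemma tau_Omega:
  assumes "f \<in> infinite_trees" shows "tau f \<in> infinite_trees"
proof -
  have pl: "\<forall>i. plane_tree (f i)" and ex: "\<forall>N. \<exists>i. N \<le> i \<and> (\<exists>u\<in>f i. u \<noteq> [])"
    using assms unfolding infinite_trees_char by auto
  obtain i0 u0 where "u0 \<in> f i0" "u0 \<noteq> []" using ex by blast
  then have "1 \<le> kids (f i0) []" using plane_nonroot_kids pl by blast
  then have ex1: "\<exists>i. 1 \<le> kids (f i) []" by blast
  define m where "m = first_nontriv f"
  have km: "1 \<le> kids (f m) []" using first_nontriv_ex[OF ex1] m_def by simp
  have pm: "plane_tree (f m)" using pl by simp
  have t0: "tau f 0 = subtree (f m) [1]" by (simp add: tau_unfold m_def)
  have t1: "tau f 1 = reduced (f m)" by (simp add: tau_unfold m_def)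
  have tj: "tau f j = f (j + m - 1)" if "2 \<le> j" for j using that by (simp add: tau_unfold m_def)
  have "[] @ [1] \<in> f m" using plane_child_iff[OF pm plane_root[OF pm]] km by simp
  then have p0: "plane_tree (tau f 0)" using plane_subtree[OF pm] t0 by simp
  have "f m \<in> beta ` (Collect plane_tree \<times> Collect plane_tree)"
    using beta_bij km pm by (auto simp: bij_betw_def)
  then obtain s r where sr: "plane_tree s" "plane_tree r" "f m = beta (s, r)" by auto
  then have p1: "plane_tree (tau f 1)" using t1 beta_props by simp
  have pall: "plane_tree (tau f j)" for j
  proof -
    consider "j = 0" | "j = 1" | "2 \<le> j" by linarith
    then show ?thesis using p0 p1 tj pl by cases auto
  qed
  have "\<forall>N. \<exists>i. N \<le> i \<and> (\<exists>u\<in>tau f i. u \<noteq> [])"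
  proof
    fix N
    obtain i' where i': "N + m + 1 \<le> i'" "\<exists>u\<in>f i'. u \<noteq> []" using ex by blast
    define i where "i = i' + 1 - m"
    have "2 \<le> i" "N \<le> i" "i + m - 1 = i'" using i' by (auto simp: i_def)
    then show "\<exists>i. N \<le> i \<and> (\<exists>u\<in>tau f i. u \<noteq> [])" using tj i' by metis
  qed
  then show ?thesis unfolding infinite_trees_char using pall by blast
qed

lemma Omega_sets: "infinite_trees \<in> sets (tree_product mu)"
  unfolding infinite_trees_char
  by (intro TP_conj TP_All TP_Ex sets_coord)

lemma ennreal_le_pow_zero:
  fixes c :: real
  assumes le: "\<And>n. x \<le> ennreal (c ^ n)" and c: "0 \<le> c" "c < 1"
  shows "x = 0"
proof -
  have "x \<le> 1" using le[of 0] by simp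
  then obtain r where r: "x = ennreal r" "0 \<le> r" by (cases x) (auto simp: top_unique)
  show ?thesis
  proof (rule ccontr)
    assume "x \<noteq> 0"
    then have "0 < r" using r by (simp add: less_le)
    then obtain n where "c ^ n < r" using real_arch_pow_inv c(2) by blast
    moreover have "r \<le> c ^ n" using le[of n] r c by (simp add: ennreal_le_iff)
    ultimately show False by simp
  qed
qed

context
  fixes mu :: "nat pmf"
  assumes critical: "(\<lambda>k. real k * pmf mu k) sums 1" and nondeg: "pmf mu 1 \<noteq> 1"
begin

lemma Ms_prob: "prob_space (Ms mu i)"
  unfolding Ms_def using prob_GW[OF critical nondeg] by simp

lemma PP: "product_prob_space (Ms mu)"
  unfolding product_prob_space_def product_prob_space_axioms_def product_sigma_finite_def
  using Ms_prob prob_space_imp_sigma_finite by blast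

lemma p0: "0 < pmf mu 0" "pmf mu 0 \<le> 1"
  using pmf0_pos[OF critical nondeg] pmf_le_1 by auto

lemma Y_null: "{f. \<forall>i. N \<le> i \<longrightarrow> kids (f i) [] = 0} \<in> null_sets (tree_product mu)"
proof -
  interpret PP: product_prob_space "Ms mu" UNIV by (rule PP)
  let ?Y = "{f. \<forall>i. N \<le> i \<longrightarrow> kids (f i) [] = 0}"
  have Ys: "?Y \<in> sets (tree_product mu)" by (intro TP_All sets_coord)
  have le: "emeasure (tree_product mu) ?Y \<le> ennreal ((1 - pmf mu 0) ^ n)" for n
  proof -
    let ?J = "{Suc N..N + n}"
    have "?Y \<subseteq> {x \<in> space (PiM UNIV (Ms mu)). \<forall>i\<in>?J. x i \<in> {t. kids t [] = 0}}" by auto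
    moreover have "{x. \<forall>i\<in>?J. kids (x i) [] = 0} \<in> sets (tree_product mu)" by (intro TP_Ball sets_coord)
    ultimately have "emeasure (tree_product mu) ?Y \<le> emeasure (PiM UNIV (Ms mu)) {x \<in> space (PiM UNIV (Ms mu)). \<forall>i\<in>?J. x i \<in> {t. kids t [] = 0}}"
      unfolding tree_product_Ms by (intro emeasure_mono) simp_all
    also have "\<dots> = (\<Prod>i\<in>?J. emeasure (Ms mu i) {t. kids t [] = 0})"
      by (rule PP.emeasure_PiM_Collect) simp_all
    also have "\<dots> = (\<Prod>i\<in>?J. ennreal (1 - pmf mu 0))"
      by (intro prod.cong) (simp_all add: Ms_def GWs_triv)
    also have "\<dots> = ennreal ((1 - pmf mu 0) ^ n)"
      using p0 by (simp add: ennreal_power)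
    finally show ?thesis .
  qed
  have "emeasure (tree_product mu) ?Y = 0"
    by (rule ennreal_le_pow_zero[OF le]) (use p0 in auto)
  then show ?thesis using Ys by (simp add: null_sets_def)
qed

lemma compl_null: "UNIV - infinite_trees \<in> null_sets (tree_product mu)"
proof -
  interpret PP: product_prob_space "Ms mu" UNIV by (rule PP)
  have np: "{f. \<not> plane_tree (f i)} \<in> null_sets (tree_product mu)" for i
  proof -
    have "emeasure (PiM UNIV (Ms mu)) {x \<in> space (PiM UNIV (Ms mu)). x i \<in> {t. \<not> plane_tree t}} = emeasure (Ms mu i) {t. \<not> plane_tree t}"
      by (rule PP.emeasure_PiM_Collect_single) simp_all
    also have "\<dots> = 0"
    proof -
      have e: "{t. plane_tree t} \<inter> {t. \<not> plane_tree t} = {}" by blast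
      show ?thesis by (simp add: Ms_def emeasure_GW emeasure_GWs e nn_integral_count_space_finite)
    qed
    finally show ?thesis using sets_coord[of "\<lambda>t. \<not> plane_tree t" i mu] by (simp add: tree_product_Ms null_sets_def)
  qed
  have "UNIV - infinite_trees \<subseteq> (\<Union>i. {f. \<not> plane_tree (f i)}) \<union> (\<Union>N. {f. \<forall>i. N \<le> i \<longrightarrow> kids (f i) [] = 0})"
  proof
    fix f assume "f \<in> UNIV - infinite_trees"
    then have "\<not> ((\<forall>i. plane_tree (f i)) \<and> (\<forall>N. \<exists>i. N \<le> i \<and> (\<exists>u\<in>f i. u \<noteq> [])))"
      unfolding infinite_trees_char by blast
    then show "f \<in> (\<Union>i. {f. \<not> plane_tree (f i)}) \<union> (\<Union>N. {f. \<forall>i. N \<le> i \<longrightarrow> kids (f i) [] = 0})"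
      using kids_no_nonroot by blast
  qed
  moreover have "(\<Union>i. {f. \<not> plane_tree (f i)}) \<union> (\<Union>N. {f. \<forall>i. N \<le> i \<longrightarrow> kids (f i) [] = 0}) \<in> null_sets (tree_product mu)"
    using np Y_null by (intro null_sets.Un null_sets_UN) auto
  moreover have "UNIV - infinite_trees \<in> sets (tree_product mu)"
    using Omega_sets sets.compl_sets[of infinite_trees "tree_product mu"] by simp
  ultimately show ?thesis by (meson null_sets_subset)
qed

end




context
  fixes mu :: "nat pmf"
  assumes critical: "(\<lambda>k. real k * pmf mu k) sums 1" and nondeg: "pmf mu 1 \<noteq> 1"
begin

lemma E_cyl:
  assumes R: "\<forall>j\<in>R. 2 \<le> j"
  shows "{f. (\<forall>i<m. kids (f i) [] = 0) \<and> f m \<in> Core \<and> (\<forall>j\<in>R. f (j + m - 1) \<in> F j)} =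
    {x \<in> space (PiM UNIV (Ms mu)). \<forall>i \<in> insert m {..<m} \<union> (\<lambda>j. j + m - 1) ` R.
       x i \<in> (if i < m then {t. kids t [] = 0} else if i = m then Core else F (i + 1 - m))}"
    (is "?L = ?R")
proof (intro set_eqI iffI)
  fix x assume x: "x \<in> ?L"
  have "x i \<in> (if i < m then {t. kids t [] = 0} else if i = m then Core else F (i + 1 - m))"
    if i: "i \<in> insert m {..<m} \<union> (\<lambda>j. j + m - 1) ` R" for i
  proof -
    consider "i < m" | "i = m" | "\<exists>j\<in>R. i = j + m - 1" using i by auto
    then show ?thesis
    proof cases
      case 1 then show ?thesis using x by simp
    next
      case 2 then show ?thesis using x by simp
    next
      case 3
      then obtain j where j: "j \<in> R" "i = j + m - 1" by blast
      have "2 \<le> j" using R j by blast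
      then have "\<not> i < m" "i \<noteq> m" "i + 1 - m = j" using j by auto
      then show ?thesis using x j by simp
    qed
  qed
  then have "\<forall>i \<in> insert m {..<m} \<union> (\<lambda>j. j + m - 1) ` R.
       x i \<in> (if i < m then {t. kids t [] = 0} else if i = m then Core else F (i + 1 - m))" by blast
  then show "x \<in> ?R" by simp
next
  fix x assume x: "x \<in> ?R"
  have xm: "x i \<in> (if i < m then {t. kids t [] = 0} else if i = m then Core else F (i + 1 - m))"
    if "i \<in> insert m {..<m} \<union> (\<lambda>j. j + m - 1) ` R" for i
    using x that by blast
  have a: "\<forall>i<m. kids (x i) [] = 0"
  proof (intro allI impI)
    fix i assume i: "i < m"
    then have "i \<in> insert m {..<m} \<union> (\<lambda>j. j + m - 1) ` R" by simp
    from xm[OF this] show "kids (x i) [] = 0" using i by simp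
  qed
  have b: "x m \<in> Core" using xm[of m] by simp
  have c: "\<forall>j\<in>R. x (j + m - 1) \<in> F j"
  proof
    fix j assume j: "j \<in> R"
    have "2 \<le> j" using R j by blast
    then have h: "\<not> j + m - 1 < m" "j + m - 1 \<noteq> m" "j + m - 1 + 1 - m = j" by auto
    have "j + m - 1 \<in> insert m {..<m} \<union> (\<lambda>j. j + m - 1) ` R" using j by blast
    from xm[OF this] show "x (j + m - 1) \<in> F j" using h by simp
  qed
  show "x \<in> ?L" using a b c by simp
qed

lemma T0_prod: "(\<Prod>i<m. emeasure (Ms mu i) {t. kids t [] = 0}) =
   (if m = 0 then 1 else ennreal (pmf mu 0 * (1 - pmf mu 0) ^ (m - 1)))"
proof (cases m)
  case 0 then show ?thesis by simp
next
  case (Suc k)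
  have "(\<Prod>i<Suc k. emeasure (Ms mu i) {t. kids t [] = 0}) =
     emeasure (Ms mu 0) {t. kids t [] = 0} * (\<Prod>i<k. emeasure (Ms mu (Suc i)) {t. kids t [] = 0})"
    by (rule prod.lessThan_Suc_shift)
  also have "\<dots> = ennreal (pmf mu 0) * (\<Prod>i<k. ennreal (1 - pmf mu 0))"
    by (simp add: Ms_def GW_triv GWs_triv)
  also have "\<dots> = ennreal (pmf mu 0 * (1 - pmf mu 0) ^ k)"
    using p0[OF critical nondeg] by (simp add: ennreal_power ennreal_mult)
  finally show ?thesis using Suc by simp
qed

lemma geom: "(\<Sum>k. ennreal (pmf mu 0 * (1 - pmf mu 0) ^ k)) = 1"
proof -
  have p: "0 < pmf mu 0" "pmf mu 0 \<le> 1" using p0[OF critical nondeg] by auto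
  have n: "norm (1 - pmf mu 0) < 1" using p by simp
  have s: "summable (\<lambda>k. (1 - pmf mu 0) ^ k)" using summable_geometric[OF n] .
  have "(\<Sum>k. ennreal (pmf mu 0 * (1 - pmf mu 0) ^ k)) = ennreal (\<Sum>k. pmf mu 0 * (1 - pmf mu 0) ^ k)"
    by (rule suminf_ennreal2) (use p s in \<open>auto intro: summable_mult\<close>)
  also have "(\<Sum>k. pmf mu 0 * (1 - pmf mu 0) ^ k) = pmf mu 0 * (1 / (1 - (1 - pmf mu 0)))"
    using suminf_mult[OF s, of "pmf mu 0"] suminf_geometric[OF n] by simp
  also have "\<dots> = 1" using p by simp
  finally show ?thesis by simp
qed

lemma main_calc:
  assumes Rfin: "finite R" and R2: "\<forall>j\<in>R. 2 \<le> j"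
  shows "emeasure (tree_product mu) {f. tau f 0 \<in> A \<and> tau f 1 \<in> B \<and> (\<forall>j\<in>R. tau f j \<in> F j)} =
     emeasure (GW mu) A * emeasure (GW_spine mu) B * (\<Prod>j\<in>R. emeasure (GW_spine mu) (F j))"
proof -
  interpret PP: product_prob_space "Ms mu" UNIV by (rule PP[OF critical nondeg])
  define Core where "Core = {t. 1 \<le> kids t [] \<and> subtree t [1] \<in> A \<and> reduced t \<in> B}"
  define E where "E m = {f. (\<forall>i<m. kids (f i) [] = 0) \<and> f m \<in> Core \<and> (\<forall>j\<in>R. f (j + m - 1) \<in> F j)}" for m
  define X where "X = {f. tau f 0 \<in> A \<and> tau f 1 \<in> B \<and> (\<forall>j\<in>R. tau f j \<in> F j)}"
  define Z where "Z = {f::nat \<Rightarrow> nat list set. \<forall>i. 0 \<le> i \<longrightarrow> kids (f i) [] = 0}"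
  define Pr where "Pr = (\<Prod>j\<in>R. emeasure (GW_spine mu) (F j))"
  have Zn: "Z \<in> null_sets (tree_product mu)" unfolding Z_def by (rule Y_null[OF critical nondeg])
  have tgt: "{g. g 0 \<in> A \<and> g 1 \<in> B \<and> (\<forall>j\<in>R. g j \<in> F j)} \<in> sets (tree_product mu)"
    by (intro TP_conj TP_Ball sets_coord)
  have Xs: "X \<in> sets (tree_product mu)"
  proof -
    have "tau -` {g. g 0 \<in> A \<and> g 1 \<in> B \<and> (\<forall>j\<in>R. g j \<in> F j)} \<inter> space (tree_product mu) \<in> sets (tree_product mu)"
      by (rule measurable_sets[OF meas_tau tgt])
    moreover have "tau -` {g. g 0 \<in> A \<and> g 1 \<in> B \<and> (\<forall>j\<in>R. g j \<in> F j)} \<inter> space (tree_product mu) = X"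
      unfolding X_def by auto
    ultimately show ?thesis by simp
  qed
  have tauE: "tau f 0 = subtree (f m) [1]" "tau f 1 = reduced (f m)" "\<And>j. 2 \<le> j \<Longrightarrow> tau f j = f (j + m - 1)"
    if "first_nontriv f = m" for f m
    using that by (simp_all add: tau_unfold)
  have XZ: "X - Z = (\<Union>m. E m)"
  proof (intro set_eqI iffI)
    fix f assume f: "f \<in> X - Z"
    then have "\<exists>i. 1 \<le> kids (f i) []" unfolding Z_def by (auto simp: Suc_le_eq)
    note fe = first_nontriv_ex[OF this]
    define m where "m = first_nontriv f"
    have km: "1 \<le> kids (f m) []" "\<forall>i<m. kids (f i) [] = 0" using fe unfolding m_def by auto
    note te = tauE[OF m_def[symmetric]]
    have fx: "tau f 0 \<in> A" "tau f 1 \<in> B" "\<forall>j\<in>R. tau f j \<in> F j" using f unfolding X_def by auto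
    have c3: "\<forall>j\<in>R. f (j + m - 1) \<in> F j"
    proof
      fix j assume j: "j \<in> R"
      then have "2 \<le> j" using R2 by blast
      then show "f (j + m - 1) \<in> F j" using fx(3) j te(3) by metis
    qed
    have "f \<in> E m" unfolding E_def Core_def using km fx(1,2) te(1,2) c3 by simp
    then show "f \<in> (\<Union>m. E m)" by blast
  next
    fix f assume "f \<in> (\<Union>m. E m)"
    then obtain m where f: "f \<in> E m" by blast
    then have fm: "first_nontriv f = m" unfolding E_def Core_def by (intro first_nontriv_eq) auto
    have e: "1 \<le> kids (f m) []" "subtree (f m) [1] \<in> A" "reduced (f m) \<in> B" "\<forall>j\<in>R. f (j + m - 1) \<in> F j"
      using f unfolding E_def Core_def by auto
    note te = tauE[OF fm]
    have "f \<notin> Z" unfolding Z_def using e(1) by force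
    moreover have "\<forall>j\<in>R. tau f j \<in> F j"
    proof
      fix j assume j: "j \<in> R"
      then have "2 \<le> j" using R2 by blast
      then show "tau f j \<in> F j" using e(4) j te(3) by metis
    qed
    then have "f \<in> X" unfolding X_def using e(2,3) te(1,2) by simp
    ultimately show "f \<in> X - Z" by simp
  qed
  have disj: "disjoint_family E"
    unfolding disjoint_family_on_def
  proof (intro ballI impI)
    fix m n :: nat assume mn: "m \<noteq> n"
    show "E m \<inter> E n = {}"
    proof safe
      fix f assume "f \<in> E m" "f \<in> E n"
      then have "first_nontriv f = m" "first_nontriv f = n"
        unfolding E_def Core_def by (auto intro!: first_nontriv_eq)
      then show "f \<in> {}" using mn by simp
    qed
  qed
  have Es: "E m \<in> sets (tree_product mu)" for m
    unfolding E_def by (intro TP_conj TP_All TP_Ball sets_coord)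
  have Ev: "emeasure (tree_product mu) (E m) =
      (if m = 0 then 1 else ennreal (pmf mu 0 * (1 - pmf mu 0) ^ (m - 1))) * emeasure (Ms mu m) Core * Pr" for m
  proof -
    let ?J = "insert m {..<m} \<union> (\<lambda>j. j + m - 1) ` R"
    let ?X = "\<lambda>i. if i < m then {t. kids t [] = 0} else if i = m then Core else F (i + 1 - m)"
    have "emeasure (tree_product mu) (E m) = emeasure (PiM UNIV (Ms mu)) {x \<in> space (PiM UNIV (Ms mu)). \<forall>i\<in>?J. x i \<in> ?X i}"
      unfolding E_def tree_product_Ms E_cyl[OF R2] ..
    also have "\<dots> = (\<Prod>i\<in>?J. emeasure (Ms mu i) (?X i))"
      by (rule PP.emeasure_PiM_Collect) (use Rfin in auto)
    also have "\<dots> = (\<Prod>i\<in>insert m {..<m}. emeasure (Ms mu i) (?X i)) * (\<Prod>i\<in>(\<lambda>j. j + m - 1) ` R. emeasure (Ms mu i) (?X i))"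
    proof (rule prod.union_disjoint)
      show "insert m {..<m} \<inter> (\<lambda>j. j + m - 1) ` R = {}" using R2 by force
    qed (use Rfin in auto)
    also have "(\<Prod>i\<in>insert m {..<m}. emeasure (Ms mu i) (?X i)) = emeasure (Ms mu m) Core * (\<Prod>i<m. emeasure (Ms mu i) {t. kids t [] = 0})"
      by (simp add: prod.insert)
    also have "(\<Prod>i\<in>(\<lambda>j. j + m - 1) ` R. emeasure (Ms mu i) (?X i)) = (\<Prod>j\<in>R. emeasure (Ms mu (j + m - 1)) (?X (j + m - 1)))"
      by (rule prod.reindex_cong[where l="\<lambda>j. j + m - 1"]) (use R2 in \<open>auto simp: inj_on_def\<close>)
    also have "\<dots> = Pr" unfolding Pr_def
    proof (rule prod.cong[OF refl])
      fix j assume j: "j \<in> R"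
      then have "2 \<le> j" using R2 by blast
      then have "\<not> j + m - 1 < m" "j + m - 1 \<noteq> m" "j + m - 1 + 1 - m = j" "j + m - 1 \<noteq> 0" by auto
      then show "emeasure (Ms mu (j + m - 1)) (?X (j + m - 1)) = emeasure (GW_spine mu) (F j)"
        by (simp add: Ms_def)
    qed
    finally show ?thesis by (simp add: T0_prod mult.commute mult.left_commute)
  qed
  have "emeasure (tree_product mu) X = emeasure (tree_product mu) (X - Z)"
    by (rule emeasure_Diff_null_set[OF Zn Xs, symmetric])
  also have "\<dots> = (\<Sum>m. emeasure (tree_product mu) (E m))"
    unfolding XZ by (rule suminf_emeasure[symmetric]) (use Es disj in auto)
  also have "\<dots> = emeasure (GW mu) Core * Pr + emeasure (GW_spine mu) Core * Pr"
  proof -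
    let ?c = "\<lambda>m. emeasure (tree_product mu) (E m)"
    have "(\<lambda>k. ?c (Suc k)) sums (\<Sum>k. ?c (Suc k))" by (rule summable_sums) simp
    then have "?c sums ((\<Sum>k. ?c (Suc k)) + ?c 0)" by (rule sums_Suc)
    then have "(\<Sum>m. ?c m) = (\<Sum>k. ?c (Suc k)) + ?c 0" by (rule sums_unique[symmetric])
    also have "(\<Sum>k. ?c (Suc k)) = (\<Sum>k. ennreal (pmf mu 0 * (1 - pmf mu 0) ^ k) * (emeasure (GW_spine mu) Core * Pr))"
      by (intro suminf_cong) (simp add: Ev Ms_def mult.assoc)
    also have "\<dots> = emeasure (GW_spine mu) Core * Pr" using geom by simp
    also have "?c 0 = emeasure (GW mu) Core * Pr" by (simp add: Ev Ms_def)
    finally show ?thesis by (simp add: add.commute)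
  qed
  also have "\<dots> = (emeasure (GW mu) Core + emeasure (GW_spine mu) Core) * Pr" by (simp add: distrib_right)
  also have "\<dots> = emeasure (GW mu) A * emeasure (GW_spine mu) B * Pr"
    unfolding Core_def core_identity ..
  finally show ?thesis unfolding X_def Pr_def .
qed

lemma TP_inv: "distr (tree_product mu) (tree_product mu) tau = tree_product mu"
proof -
  interpret PP: product_prob_space "Ms mu" UNIV by (rule PP[OF critical nondeg])
  have mt: "tau \<in> measurable (PiM UNIV (Ms mu)) (PiM UNIV (Ms mu))"
    using meas_tau[of mu] unfolding tree_product_Ms .
  have "distr (PiM UNIV (Ms mu)) (PiM UNIV (Ms mu)) tau = PiM UNIV (Ms mu)"
  proof (rule PP.PiM_eq)
    show "sets (distr (PiM UNIV (Ms mu)) (PiM UNIV (Ms mu)) tau) = sets (PiM UNIV (Ms mu))" by simp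
  next
    fix J :: "nat set" and F :: "nat \<Rightarrow> nat list set set"
    assume J: "finite J" "J \<subseteq> UNIV" and F: "\<And>j. j \<in> J \<Longrightarrow> F j \<in> sets (Ms mu j)"
    have pe: "prod_emb UNIV (Ms mu) J (\<Pi>\<^sub>E j\<in>J. F j) = {g. \<forall>j\<in>J. g j \<in> F j}"
      by (auto simp: prod_emb_iff)
    have cs: "{g. \<forall>j\<in>J. g j \<in> F j} \<in> sets (PiM UNIV (Ms mu))"
    proof -
      have "{g. \<forall>j\<in>J. g j \<in> F j} \<in> sets (tree_product mu)" by (intro TP_Ball sets_coord)
      then show ?thesis unfolding tree_product_Ms .
    qed
    define A where "A = (if 0 \<in> J then F 0 else UNIV)"
    define B where "B = (if 1 \<in> J then F 1 else UNIV)"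
    define R where "R = J - {0, 1}"
    have R: "finite R" "\<forall>j\<in>R. 2 \<le> j" using J by (auto simp: R_def)
    have "emeasure (distr (PiM UNIV (Ms mu)) (PiM UNIV (Ms mu)) tau) (prod_emb UNIV (Ms mu) J (\<Pi>\<^sub>E j\<in>J. F j))
        = emeasure (PiM UNIV (Ms mu)) (tau -` {g. \<forall>j\<in>J. g j \<in> F j} \<inter> space (PiM UNIV (Ms mu)))"
      unfolding pe by (rule emeasure_distr[OF mt cs])
    also have "tau -` {g. \<forall>j\<in>J. g j \<in> F j} \<inter> space (PiM UNIV (Ms mu)) =
        {f. tau f 0 \<in> A \<and> tau f 1 \<in> B \<and> (\<forall>j\<in>R. tau f j \<in> F j)}"
      unfolding A_def B_def R_def by auto
    also have "emeasure (PiM UNIV (Ms mu)) {f. tau f 0 \<in> A \<and> tau f 1 \<in> B \<and> (\<forall>j\<in>R. tau f j \<in> F j)}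
        = emeasure (GW mu) A * emeasure (GW_spine mu) B * (\<Prod>j\<in>R. emeasure (GW_spine mu) (F j))"
      using main_calc[OF R, of A B F] unfolding tree_product_Ms .
    also have "\<dots> = (\<Prod>j\<in>J. emeasure (Ms mu j) (F j))"
    proof -
      let ?G = "\<lambda>j. emeasure (Ms mu j) (if j \<in> J then F j else UNIV)"
      have one: "emeasure (Ms mu j) UNIV = 1" for j
        using prob_space.emeasure_space_1[OF Ms_prob[OF critical nondeg, of j]] by simp
      have "(\<Prod>j\<in>J. emeasure (Ms mu j) (F j)) = (\<Prod>j\<in>insert 0 (insert 1 R). ?G j)"
        by (rule prod.mono_neutral_cong_left) (use J one in \<open>auto simp: R_def\<close>)
      also have "\<dots> = ?G 0 * (?G 1 * (\<Prod>j\<in>R. ?G j))"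
        using R by (simp add: prod.insert R_def)
      also have "(\<Prod>j\<in>R. ?G j) = (\<Prod>j\<in>R. emeasure (GW_spine mu) (F j))"
        by (intro prod.cong) (auto simp: R_def Ms_def)
      also have "?G 0 = emeasure (GW mu) A" by (simp add: A_def Ms_def)
      also have "?G 1 = emeasure (GW_spine mu) B" by (simp add: B_def Ms_def)
      finally show ?thesis by (simp add: mult.assoc)
    qed
    finally show "emeasure (distr (PiM UNIV (Ms mu)) (PiM UNIV (Ms mu)) tau) (prod_emb UNIV (Ms mu) J (\<Pi>\<^sub>E j\<in>J. F j))
        = (\<Prod>j\<in>J. emeasure (Ms mu j) (F j))" .
  qed
  then show ?thesis unfolding tree_product_Ms .
qed

end

theorem proposition2p1:
  fixes mu :: "nat pmf"
  assumes critical: "(\<lambda>k. real k * pmf mu k) sums 1"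
    and nondeg: "pmf mu 1 \<noteq> 1"
  shows "tau \<in> measurable (P_mu mu) (P_mu mu) \<and> distr (P_mu mu) (P_mu mu) tau = P_mu mu"
proof -
  have Os: "infinite_trees \<inter> space (tree_product mu) \<in> sets (tree_product mu)"
    using Omega_sets[of mu] by simp
  have mt: "tau \<in> measurable (tree_product mu) (tree_product mu)" by (rule meas_tau)
  have sp: "space (P_mu mu) = infinite_trees" by (simp add: P_mu_def space_restrict_space)
  have M1: "tau \<in> measurable (P_mu mu) (P_mu mu)"
    unfolding P_mu_def
  proof (rule measurable_restrict_space2)
    show "tau \<in> space (restrict_space (tree_product mu) infinite_trees) \<rightarrow> infinite_trees"
      using tau_Omega by (auto simp: space_restrict_space)
    show "tau \<in> measurable (restrict_space (tree_product mu) infinite_trees) (tree_product mu)"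
      by (rule measurable_restrict_space1[OF mt])
  qed
  have M2: "distr (P_mu mu) (P_mu mu) tau = P_mu mu"
  proof (rule measure_eqI)
    show "sets (distr (P_mu mu) (P_mu mu) tau) = sets (P_mu mu)" by simp
    fix A assume "A \<in> sets (distr (P_mu mu) (P_mu mu) tau)"
    then have A: "A \<in> sets (P_mu mu)" by simp
    then have A': "A \<subseteq> infinite_trees" "A \<in> sets (tree_product mu)"
      using sets_restrict_space_iff[OF Os] unfolding P_mu_def by auto
    have pre: "tau -` A \<in> sets (tree_product mu)"
      using measurable_sets[OF mt A'(2)] by simp
    have "emeasure (distr (P_mu mu) (P_mu mu) tau) A = emeasure (P_mu mu) (tau -` A \<inter> space (P_mu mu))"
      by (rule emeasure_distr[OF M1 A])
    also have "\<dots> = emeasure (tree_product mu) (tau -` A \<inter> infinite_trees)"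
      unfolding sp unfolding P_mu_def by (rule emeasure_restrict_space[OF Os]) simp
    also have "tau -` A \<inter> infinite_trees = tau -` A - (UNIV - infinite_trees)" by blast
    also have "emeasure (tree_product mu) \<dots> = emeasure (tree_product mu) (tau -` A)"
      by (rule emeasure_Diff_null_set[OF compl_null[OF critical nondeg] pre])
    also have "\<dots> = emeasure (distr (tree_product mu) (tree_product mu) tau) A"
      using emeasure_distr[OF mt A'(2)] by simp
    also have "\<dots> = emeasure (tree_product mu) A" using TP_inv[OF critical nondeg] by simp
    also have "\<dots> = emeasure (P_mu mu) A"
      unfolding P_mu_def by (rule emeasure_restrict_space[OF Os A'(1), symmetric])
    finally show "emeasure (distr (P_mu mu) (P_mu mu) tau) A = emeasure (P_mu mu) A" .
  qed
  show ?thesis using M1 M2 by simp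
qed



end
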